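(* If $s\in\{A,B\}^{\mathbb{N}}$ is a computable word, then $\mathrm{NADG}_s(\mathbb{Z}^d)$ is recursively enumerable.
   Context: A pattern is $p=(S,f)$ with $S\subseteq\mathbb{Z}^d$, $f\in\mathcal{A}^S$; a finite pattern $q=(S',g)$ appears in $p=(S,f)$ if $v+S'\subseteq S$ and $f(v+j)=g(j)$ for all $j\in S'$, for some $v\in\mathbb{Z}^d$. For a turn order word $s=s_0s_1\cdots\in\{A,B\}^{\mathbb{N}}$, the non-alternating Domino game $\Gamma_s(\mathcal{A},\mathcal{F},\mathbb{Z}^d)$ (finite alphabet $\mathcal{A}$, finite set $\mathcal{F}$ of finite patterns) starts from the empty pattern, and at turn $i$ player $s_i$ either passes or colours one uncoloured cell of $\mathbb{Z}^d$ with a colour of $\mathcal{A}$. As soon as a pattern of $\mathcal{F}$ appears in the current pattern, $A$ wins; $B$ wins if this never happens. $\mathrm{NADG}_s(\mathbb{Z}^d)$ is the problem: given $(\mathcal{A},\mathcal{F})$, does $A$ have a winning strategy in $\Gamma_s(\mathcal{A},\mathcal{F},\mathbb{Z}^d)$? A word $s$ is computable if $i\mapsto s_i$ is computable. *)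

theory Defs
  imports Main "HOL-Library.Nat_Bijection"
begin

datatype recf = Zr | Sc | Id nat | Cn recf "recf list" | Pr recf recf | Mn recf

inductive eval :: "recf \<Rightarrow> nat list \<Rightarrow> nat \<Rightarrow> bool" where
  eval_Zr: "eval Zr xs 0"
| eval_Sc: "eval Sc (x # xs) (Suc x)"
| eval_Id: "i < length xs \<Longrightarrow> eval (Id i) xs (xs ! i)"
| eval_Cn: "list_all2 (\<lambda>g r. eval g xs r) gs rs \<Longrightarrow> eval f rs y \<Longrightarrow> eval (Cn f gs) xs y"
| eval_Pr0: "eval f xs y \<Longrightarrow> eval (Pr f g) (0 # xs) y"
| eval_PrS: "eval (Pr f g) (n # xs) r \<Longrightarrow> eval g (n # r # xs) y \<Longrightarrow> eval (Pr f g) (Suc n # xs) y"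
| eval_Mn: "eval f (n # xs) 0 \<Longrightarrow> (\<forall>m<n. \<exists>r. eval f (m # xs) r \<and> r \<noteq> 0) \<Longrightarrow> eval (Mn f) xs n"

definition rec_enum :: "nat set \<Rightarrow> bool" where
  "rec_enum L \<longleftrightarrow> (\<exists>f. \<forall>n. n \<in> L \<longleftrightarrow> (\<exists>y. eval f [n] y))"

datatype player = PlA | PlB

definition computable_word :: "(nat \<Rightarrow> player) \<Rightarrow> bool" where
  "computable_word s \<longleftrightarrow>
     (\<exists>f. \<forall>i. eval f [i] (if s i = PlA then 0 else 1))"

text \<open>Alphabet: {0..<k}. Cells of Z^d: integer lists of length d.
  Patterns: partial maps from cells to colours. A finite pattern in an instance is
  given as a list of (cell, colour) pairs.\<close>

type_synonym cell = "int list"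
type_synonym config = "cell \<Rightarrow> nat option"
type_synonym fpattern = "(cell \<times> nat) list"

datatype move = Pass | Put cell nat

definition vadd :: "cell \<Rightarrow> cell \<Rightarrow> cell" where
  "vadd v j = map2 (+) v j"

definition appears :: "nat \<Rightarrow> (cell \<Rightarrow> nat option) \<Rightarrow> config \<Rightarrow> bool" where
  "appears d q p \<longleftrightarrow> (\<exists>v. length v = d \<and> (\<forall>j \<in> dom q. p (vadd v j) = q j))"

text \<open>Applying a move; an illegal move is treated as a pass.\<close>
definition apply_move :: "nat \<Rightarrow> nat \<Rightarrow> config \<Rightarrow> move \<Rightarrow> config" where
  "apply_move k d c m = (case m of Pass \<Rightarrow> c
     | Put x a \<Rightarrow> if length x = d \<and> a < k \<and> c x = None then c(x \<mapsto> a) else c)"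

definition config_of :: "nat \<Rightarrow> nat \<Rightarrow> move list \<Rightarrow> config" where
  "config_of k d h = fold (\<lambda>m c. apply_move k d c m) h Map.empty"

type_synonym strategy = "move list \<Rightarrow> move"

primrec history :: "(nat \<Rightarrow> player) \<Rightarrow> strategy \<Rightarrow> strategy \<Rightarrow> nat \<Rightarrow> move list" where
  "history s sA sB 0 = []"
| "history s sA sB (Suc i) =
     history s sA sB i @ [(if s i = PlA then sA else sB) (history s sA sB i)]"

definition A_wins_play :: "nat \<Rightarrow> nat \<Rightarrow> fpattern list \<Rightarrow> (nat \<Rightarrow> player) \<Rightarrow> strategy \<Rightarrow> strategy \<Rightarrow> bool" where
  "A_wins_play k d F s sA sB \<longleftrightarrow>
     (\<exists>i. \<exists>q \<in> set F. appears d (map_of q) (config_of k d (history s sA sB i)))"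

definition A_has_winning_strategy :: "nat \<Rightarrow> nat \<Rightarrow> fpattern list \<Rightarrow> (nat \<Rightarrow> player) \<Rightarrow> bool" where
  "A_has_winning_strategy k d F s \<longleftrightarrow> (\<exists>sA. \<forall>sB. A_wins_play k d F s sA sB)"

definition valid_instance :: "nat \<Rightarrow> nat \<Rightarrow> fpattern list \<Rightarrow> bool" where
  "valid_instance k d F \<longleftrightarrow>
     (\<forall>q \<in> set F. distinct (map fst q) \<and> (\<forall>(x, a) \<in> set q. length x = d \<and> a < k))"

definition decode_entry :: "nat \<Rightarrow> cell \<times> nat" where
  "decode_entry e = (case prod_decode e of (c, a) \<Rightarrow> (map int_decode (list_decode c), a))"

definition decode_instance :: "nat \<Rightarrow> nat \<times> fpattern list" where
  "decode_instance n = (case prod_decode n of (k, m) \<Rightarrow>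
     (k, map (\<lambda>p. map decode_entry (list_decode p)) (list_decode m)))"

definition NADG :: "(nat \<Rightarrow> player) \<Rightarrow> nat \<Rightarrow> nat set" where
  "NADG s d = {n. case decode_instance n of (k, F) \<Rightarrow>
      valid_instance k d F \<and> A_has_winning_strategy k d F s}"

end

theory Submission
  imports Defs
begin

lemma eval_det: "eval f xs y \<Longrightarrow> eval f xs y' \<Longrightarrow> y = y'"
proof (induction arbitrary: y' rule: eval.induct)
  case (eval_Zr xs)
  from eval_Zr.prems show ?case by (cases rule: eval.cases) auto
next
  case (eval_Sc x xs)
  from eval_Sc.prems show ?case by (cases rule: eval.cases) auto
next
  case (eval_Id i xs)
  from eval_Id.prems show ?case by (cases rule: eval.cases) auto
next
  case (eval_Cn xs gs rs f y)
  from eval_Cn.prems obtain rs' where a: "list_all2 (\<lambda>g r. eval g xs r) gs rs'" and b: "eval f rs' y'"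
    by (cases rule: eval.cases) auto
  have "rs = rs'" using eval_Cn.IH(1) a
  proof (induction gs arbitrary: rs rs')
    case Nil then show ?case by auto
  next
    case (Cons g gs)
    then obtain r rr r' rr' where "rs = r # rr" "rs' = r' # rr'" 
      by (cases rs; cases rs') auto
    with Cons show ?case by auto
  qed
  then show ?case using eval_Cn.IH(2) b by auto
next
  case (eval_Pr0 f xs y g)
  from eval_Pr0.prems show ?case by (cases rule: eval.cases) (use eval_Pr0.IH in auto)
next
  case (eval_PrS f g n xs r y)
  from eval_PrS.prems show ?case
    by (cases rule: eval.cases) (use eval_PrS.IH in auto)
next
  case (eval_Mn f n xs)
  from eval_Mn.prems obtain n' where e: "y' = n'" "eval f (n' # xs) 0"
    "\<forall>m<n'. \<exists>r. eval f (m # xs) r \<and> r \<noteq> 0"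
    by (cases rule: eval.cases) auto
  show ?case
  proof (rule ccontr)
    assume "n \<noteq> y'"
    then have "n < n' \<or> n' < n" using e by auto
    then show False
    proof
      assume "n < n'"
      then obtain r where "eval f (n # xs) r" "r \<noteq> 0" using e by auto
      then show False using eval_Mn.IH(1) by auto
    next
      assume "n' < n"
      then obtain r where "eval f (n' # xs) r" "\<forall>y'. eval f (n' # xs) y' \<longrightarrow> r = y'" "r \<noteq> 0"
        using eval_Mn.IH(2) by blast
      then show False using e by auto
    qed
  qed
qed

datatype exp = V nat | K nat | Plus exp exp | Monus exp exp | Times exp exp
  | Sm exp exp | It exp exp exp | Lt exp exp | Sw exp

primrec ev :: "(nat \<Rightarrow> nat) \<Rightarrow> exp \<Rightarrow> nat list \<Rightarrow> nat" where
  "ev w (V i) xs = (if i < length xs then xs ! i else 0)"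
| "ev w (K c) xs = c"
| "ev w (Plus a b) xs = ev w a xs + ev w b xs"
| "ev w (Monus a b) xs = ev w a xs - ev w b xs"
| "ev w (Times a b) xs = ev w a xs * ev w b xs"
| "ev w (Sm b e) xs = (\<Sum>i<ev w b xs. ev w e (i # xs))"
| "ev w (It a e c) xs = ((\<lambda>r. ev w e (r # xs)) ^^ ev w c xs) (ev w a xs)"
| "ev w (Lt a e) xs = ev w e (ev w a xs # xs)"
| "ev w (Sw a) xs = w (ev w a xs)"

primrec kc :: "nat \<Rightarrow> recf" where
  "kc 0 = Zr" | "kc (Suc c) = Cn Sc [kc c]"

definition "rplus = Pr (Id 0) (Cn Sc [Id 1])"
definition "rpred = Pr Zr (Id 0)"
definition "rmonus = Pr (Id 0) (Cn rpred [Id 1])"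
definition "rtimes = Pr Zr (Cn rplus [Id 1, Id 2])"

definition ids :: "nat \<Rightarrow> recf list" where "ids n = map Id [0..<n]"
definition ids2 :: "nat \<Rightarrow> recf list" where "ids2 n = map (\<lambda>j. Id (j+2)) [0..<n]"

primrec cmpl :: "recf \<Rightarrow> exp \<Rightarrow> nat \<Rightarrow> recf" where
  "cmpl fs (V i) n = (if i < n then Id i else Zr)"
| "cmpl fs (K c) n = kc c"
| "cmpl fs (Plus a b) n = Cn rplus [cmpl fs a n, cmpl fs b n]"
| "cmpl fs (Monus a b) n = Cn rmonus [cmpl fs b n, cmpl fs a n]"
| "cmpl fs (Times a b) n = Cn rtimes [cmpl fs a n, cmpl fs b n]"
| "cmpl fs (Sm b e) n = Cn (Pr Zr (Cn rplus [Id 1, Cn (cmpl fs e (Suc n)) (Id 0 # ids2 n)]))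
     (cmpl fs b n # ids n)"
| "cmpl fs (It a e c) n = Cn (Pr (cmpl fs a n) (Cn (cmpl fs e (Suc n)) (Id 1 # ids2 n)))
     (cmpl fs c n # ids n)"
| "cmpl fs (Lt a e) n = Cn (cmpl fs e (Suc n)) (cmpl fs a n # ids n)"
| "cmpl fs (Sw a) n = Cn fs [cmpl fs a n]"

lemma eval_Pr_gen:
  assumes "eval f xs (F 0)" "\<And>i. eval g (i # F i # xs) (F (Suc i))"
  shows "eval (Pr f g) (m # xs) (F m)"
  by (induction m) (auto intro: eval.intros assms)


lemma eval_Id': "i < length xs \<Longrightarrow> y = xs ! i \<Longrightarrow> eval (Id i) xs y"
  using eval_Id by auto

lemma eval_Cn1: "eval g xs r \<Longrightarrow> eval f [r] y \<Longrightarrow> eval (Cn f [g]) xs y"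
  by (rule eval_Cn[where rs="[r]"]) auto

lemma eval_Cn2: "eval g1 xs r1 \<Longrightarrow> eval g2 xs r2 \<Longrightarrow> eval f [r1, r2] y \<Longrightarrow> eval (Cn f [g1, g2]) xs y"
  by (rule eval_Cn[where rs="[r1, r2]"]) auto

lemma eval_kc: "eval (kc c) xs c"
  by (induction c) (auto intro!: eval.intros eval_Cn1)

lemma eval_rplus: "eval rplus [x, y] (x + y)"
proof -
  have "eval (Pr (Id 0) (Cn Sc [Id 1])) (x # [y]) ((\<lambda>x. x + y) x)"
  proof (rule eval_Pr_gen)
    show "eval (Id 0) [y] (0 + y)" by (rule eval_Id') auto
    fix i show "eval (Cn Sc [Id 1]) [i, i + y, y] (Suc i + y)"
      by (rule eval_Cn1[OF eval_Id'[of 1]]) (auto intro: eval_Sc)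
  qed
  then show ?thesis by (simp add: rplus_def)
qed

lemma eval_rpred: "eval rpred [x] (x - 1)"
proof -
  have "eval (Pr Zr (Id 0)) (x # []) ((\<lambda>x. x - 1) x)"
    by (rule eval_Pr_gen) (auto intro: eval_Zr eval_Id')
  then show ?thesis by (simp add: rpred_def)
qed

lemma eval_rmonus: "eval rmonus [y, x] (x - y)"
proof -
  have "eval (Pr (Id 0) (Cn rpred [Id 1])) (y # [x]) ((\<lambda>y. x - y) y)"
  proof (rule eval_Pr_gen)
    show "eval (Id 0) [x] ((\<lambda>y. x - y) 0)" by (rule eval_Id') auto
    fix i
    have a: "eval rpred [x - i] (x - i - 1)" by (rule eval_rpred)
    have b: "x - i - 1 = x - Suc i" by simp
    have c: "eval (Id 1) [i, x - i, x] (x - i)" by (rule eval_Id') auto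
    show "eval (Cn rpred [Id 1]) [i, (\<lambda>y. x - y) i, x] ((\<lambda>y. x - y) (Suc i))"
      using eval_Cn1[OF c a] b by simp
  qed
  then show ?thesis by (simp add: rmonus_def)
qed

lemma eval_rtimes: "eval rtimes [x, y] (x * y)"
proof -
  have "eval (Pr Zr (Cn rplus [Id 1, Id 2])) (x # [y]) ((\<lambda>x. x * y) x)"
  proof (rule eval_Pr_gen)
    show "eval Zr [y] ((\<lambda>x. x * y) 0)" using eval_Zr by simp
    fix i
    have a: "eval rplus [i * y, y] (i * y + y)" by (rule eval_rplus)
    have b: "eval (Id 1) [i, i * y, y] (i * y)" by (rule eval_Id') auto
    have c: "eval (Id 2) [i, i * y, y] y" by (rule eval_Id') auto
    show "eval (Cn rplus [Id 1, Id 2]) [i, (\<lambda>x. x * y) i, y] ((\<lambda>x. x * y) (Suc i))"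
      using eval_Cn2[OF b c a] by (simp add: add.commute)
  qed
  then show ?thesis by (simp add: rtimes_def)
qed

lemma la_ids: "length xs = n \<Longrightarrow> list_all2 (\<lambda>g r. eval g xs r) (ids n) xs"
  by (auto simp: ids_def list_all2_conv_all_nth intro: eval_Id')

lemma la_ids2: "length xs = n \<Longrightarrow> list_all2 (\<lambda>g r. eval g (a # b # xs) r) (ids2 n) xs"
  by (auto simp: ids2_def list_all2_conv_all_nth intro: eval_Id')

lemma comp_correct:
  assumes fs: "\<And>i. eval fs [i] (w i)"
  shows "length xs = n \<Longrightarrow> eval (cmpl fs e n) xs (ev w e xs)"
proof (induction e arbitrary: n xs)
  case (V i) then show ?case by (auto intro: eval_Id' eval_Zr)
next
  case (K c) then show ?case by (auto intro: eval_kc)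
next
  case (Plus a b)
  have "eval (cmpl fs a n) xs (ev w a xs)" "eval (cmpl fs b n) xs (ev w b xs)" using Plus by auto
  then show ?case by (simp add: eval_Cn2 eval_rplus)
next
  case (Monus a b)
  have "eval (cmpl fs a n) xs (ev w a xs)" "eval (cmpl fs b n) xs (ev w b xs)" using Monus by auto
  then show ?case by (simp add: eval_Cn2 eval_rmonus)
next
  case (Times a b)
  have "eval (cmpl fs a n) xs (ev w a xs)" "eval (cmpl fs b n) xs (ev w b xs)" using Times by auto
  then show ?case by (simp add: eval_Cn2 eval_rtimes)
next
  case (Sm b e)
  let ?F = "\<lambda>m. (\<Sum>i<m. ev w e (i # xs))"
  have eb: "eval (cmpl fs b n) xs (ev w b xs)" using Sm by auto
  have "eval (Pr Zr (Cn rplus [Id 1, Cn (cmpl fs e (Suc n)) (Id 0 # ids2 n)])) (m # xs) (?F m)" for m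
  proof (rule eval_Pr_gen)
    show "eval Zr xs (?F 0)" using eval_Zr by simp
    fix i
    have ee: "eval (cmpl fs e (Suc n)) (i # xs) (ev w e (i # xs))" using Sm.IH(2)[where n="Suc n" and xs="i # xs"] Sm.prems by simp
    have "list_all2 (\<lambda>g r. eval g (i # ?F i # xs) r) (Id 0 # ids2 n) (i # xs)"
      using Sm(3) by (simp add: la_ids2 eval_Id')
    then have "eval (Cn (cmpl fs e (Suc n)) (Id 0 # ids2 n)) (i # ?F i # xs) (ev w e (i # xs))"
      using ee by (rule eval_Cn)
    moreover have "eval (Id 1) (i # ?F i # xs) (?F i)" by (simp add: eval_Id')
    ultimately show "eval (Cn rplus [Id 1, Cn (cmpl fs e (Suc n)) (Id 0 # ids2 n)]) (i # ?F i # xs) (?F (Suc i))"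
      using eval_rplus by (simp add: eval_Cn2)
  qed
  note pr = this
  have "list_all2 (\<lambda>g r. eval g xs r) (cmpl fs b n # ids n) (ev w b xs # xs)"
    using eb Sm(3) by (simp add: la_ids)
  from eval_Cn[OF this pr] show ?case by simp
next
  case (It a e c)
  let ?F = "\<lambda>m. ((\<lambda>r. ev w e (r # xs)) ^^ m) (ev w a xs)"
  have ec: "eval (cmpl fs c n) xs (ev w c xs)" using It by auto
  have "eval (Pr (cmpl fs a n) (Cn (cmpl fs e (Suc n)) (Id 1 # ids2 n))) (m # xs) (?F m)" for m
  proof (rule eval_Pr_gen)
    show "eval (cmpl fs a n) xs (?F 0)" using It by auto
    fix i
    have ee: "eval (cmpl fs e (Suc n)) (?F i # xs) (?F (Suc i))" using It.IH(2)[where n="Suc n" and xs="?F i # xs"] It.prems by simp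
    have "list_all2 (\<lambda>g r. eval g (i # ?F i # xs) r) (Id 1 # ids2 n) (?F i # xs)"
      using It(4) by (simp add: la_ids2 eval_Id')
    then show "eval (Cn (cmpl fs e (Suc n)) (Id 1 # ids2 n)) (i # ?F i # xs) (?F (Suc i))"
      using ee by (rule eval_Cn)
  qed
  note pr = this
  have "list_all2 (\<lambda>g r. eval g xs r) (cmpl fs c n # ids n) (ev w c xs # xs)"
    using ec It(4) by (simp add: la_ids)
  from eval_Cn[OF this pr] show ?case by simp
next
  case (Lt a e)
  have ea: "eval (cmpl fs a n) xs (ev w a xs)" using Lt by auto
  have ee: "eval (cmpl fs e (Suc n)) (ev w a xs # xs) (ev w e (ev w a xs # xs))" using Lt.IH(2)[where n="Suc n" and xs="ev w a xs # xs"] Lt.prems by simp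
  have "list_all2 (\<lambda>g r. eval g xs r) (cmpl fs a n # ids n) (ev w a xs # xs)"
    using ea Lt(3) by (simp add: la_ids)
  from eval_Cn[OF this ee] show ?case by simp
next
  case (Sw a)
  have "eval (cmpl fs a n) xs (ev w a xs)" using Sw by auto
  then show ?case by (simp add: eval_Cn1 fs)
qed

primrec lift :: "nat \<Rightarrow> exp \<Rightarrow> exp" where
  "lift k (V i) = V (if i < k then i else Suc i)"
| "lift k (K c) = K c"
| "lift k (Plus a b) = Plus (lift k a) (lift k b)"
| "lift k (Monus a b) = Monus (lift k a) (lift k b)"
| "lift k (Times a b) = Times (lift k a) (lift k b)"
| "lift k (Sm b e) = Sm (lift k b) (lift (Suc k) e)"
| "lift k (It a e c) = It (lift k a) (lift (Suc k) e) (lift k c)"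
| "lift k (Lt a e) = Lt (lift k a) (lift (Suc k) e)"
| "lift k (Sw a) = Sw (lift k a)"

lemma ev_lift: "k \<le> length xs \<Longrightarrow> ev w (lift k e) (take k xs @ y # drop k xs) = ev w e xs"
proof (induction e arbitrary: k xs)
  case (V i)
  then show ?case by (auto simp: nth_append min_def)
next
  case (Sm b e)
  have "ev w (lift (Suc k) e) (take (Suc k) (i # xs) @ y # drop (Suc k) (i # xs)) = ev w e (i # xs)" for i
    using Sm.IH(2)[of "Suc k" "i # xs"] Sm.prems by simp
  then show ?case using Sm by simp
next
  case (It a e c)
  have "ev w (lift (Suc k) e) (take (Suc k) (i # xs) @ y # drop (Suc k) (i # xs)) = ev w e (i # xs)" for i
    using It.IH(2)[of "Suc k" "i # xs"] It.prems by simp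
  then show ?case using It by simp
next
  case (Lt a e)
  have "ev w (lift (Suc k) e) (take (Suc k) (i # xs) @ y # drop (Suc k) (i # xs)) = ev w e (i # xs)" for i
    using Lt.IH(2)[of "Suc k" "i # xs"] Lt.prems by simp
  then show ?case using Lt by simp
qed auto

lemma ev_lift1: "ev w (lift (Suc 0) e) (j # i # xs) = ev w e (j # xs)"
  using ev_lift[of 1 "j # xs" w e i] by simp

definition tv :: "bool \<Rightarrow> nat" where "tv P = (if P then 1 else 0)"
lemma tv_simps[simp]: "tv P \<noteq> 0 \<longleftrightarrow> P" "tv P = 0 \<longleftrightarrow> \<not> P" "0 < tv P \<longleftrightarrow> P"
  by (auto simp: tv_def)

definition "sg a = Monus (K 1) (Monus (K 1) a)"
definition "bnot a = Monus (K 1) a"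
definition "band a b = Times (sg a) (sg b)"
definition "bor a b = sg (Plus a b)"
definition "beq a b = bnot (Plus (Monus a b) (Monus b a))"
definition "blt a b = sg (Monus b a)"
definition "ble a b = bnot (Monus a b)"
definition "bex b P = sg (Sm b P)"
definition "ball b P = bnot (Sm b (bnot P))"
definition "bmin b P = Sm b (ball (Plus (V 0) (K 1)) (bnot (lift 1 P)))"
definition "cond c a b = Plus (Times (sg c) a) (Times (bnot c) b)"
definition "tri a = Sm (Plus a (K 1)) (V 0)"
definition "pe a b = Plus (tri (Plus a b)) a"
definition "pe2 a b = Plus (Times (Plus a b) (Plus (Plus a b) (K 1))) (Times (K 2) a)"
definition "pfst n = Lt n (bmin (Plus (V 0) (K 1)) (bex (Plus (V 1) (K 1)) (beq (Times (K 2) (V 2)) (pe2 (V 1) (V 0)))))"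
definition "psnd n = Lt n (bmin (Plus (V 0) (K 1)) (bex (Plus (V 1) (K 1)) (beq (Times (K 2) (V 2)) (pe2 (V 0) (V 1)))))"
definition "ehd x = pfst (Monus x (K 1))"
definition "etl x = psnd (Monus x (K 1))"
definition "elen l = Lt l (bmin (Plus (V 0) (K 1)) (beq (It (V 1) (etl (V 0)) (V 0)) (K 0)))"
definition "enth l i = ehd (It l (etl (V 0)) i)"
definition "half x = Lt x (bmin (Plus (V 0) (K 1)) (blt (V 1) (Times (K 2) (Plus (V 0) (K 1)))))"
definition "zp x = Lt x (cond (beq (Times (K 2) (half (V 0))) (V 0)) (half (V 0)) (K 0))"
definition "zn x = Lt x (cond (beq (Times (K 2) (half (V 0))) (V 0)) (K 0) (Plus (half (V 0)) (K 1)))"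

lemma ev_sg[simp]: "ev w (sg a) xs = tv (ev w a xs \<noteq> 0)" by (simp add: sg_def tv_def)
lemma ev_bnot[simp]: "ev w (bnot a) xs = tv (ev w a xs = 0)" by (simp add: bnot_def tv_def)
lemma ev_band[simp]: "ev w (band a b) xs = tv (ev w a xs \<noteq> 0 \<and> ev w b xs \<noteq> 0)" by (simp add: band_def tv_def)
lemma ev_bor[simp]: "ev w (bor a b) xs = tv (ev w a xs \<noteq> 0 \<or> ev w b xs \<noteq> 0)" by (simp add: bor_def tv_def)
lemma ev_beq[simp]: "ev w (beq a b) xs = tv (ev w a xs = ev w b xs)" by (simp add: beq_def tv_def)
lemma ev_blt[simp]: "ev w (blt a b) xs = tv (ev w a xs < ev w b xs)" by (simp add: blt_def tv_def)
lemma ev_ble[simp]: "ev w (ble a b) xs = tv (ev w a xs \<le> ev w b xs)" by (simp add: ble_def tv_def)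
lemma ev_bex[simp]: "ev w (bex b P) xs = tv (\<exists>i < ev w b xs. ev w P (i # xs) \<noteq> 0)"
  by (simp add: bex_def tv_def)
lemma ev_ball[simp]: "ev w (ball b P) xs = tv (\<forall>i < ev w b xs. ev w P (i # xs) \<noteq> 0)"
  by (auto simp: ball_def tv_def)
lemma ev_cond[simp]: "ev w (cond c a b) xs = (if ev w c xs \<noteq> 0 then ev w a xs else ev w b xs)"
  by (simp add: cond_def tv_def)

lemma sum_least_aux:
  fixes P :: "nat \<Rightarrow> bool"
  shows "(\<Sum>i<B. tv (\<forall>j<Suc i. \<not> P j)) = (if \<exists>i<B. P i then LEAST i. P i else B)"
proof (induction B)
  case 0 then show ?case by simp
next
  case (Suc B)
  show ?case
  proof (cases "\<exists>i<B. P i")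
    case True
    then have "\<exists>j<Suc B. P j" using less_SucI by blast
    moreover have "(LEAST i. P i) < B" using True by (meson LeastI_ex Least_le order.strict_trans1)
    ultimately show ?thesis using Suc True
      by (auto simp: tv_def intro: Least_le)
  next
    case False
    then show ?thesis using Suc
      apply (auto simp: tv_def less_Suc_eq)
      by (metis (mono_tags, lifting) LeastI_ex Least_le le_antisym less_Suc_eq_le not_less_eq)
  qed
qed

lemma ev_bmin[simp]: "ev w (bmin b P) xs =
  (if \<exists>i < ev w b xs. ev w P (i # xs) \<noteq> 0 then LEAST i. ev w P (i # xs) \<noteq> 0 else ev w b xs)"
  using sum_least_aux[where B="ev w b xs" and P="\<lambda>i. ev w P (i # xs) \<noteq> 0"]
  by (simp add: bmin_def ev_lift1)

lemma ev_tri[simp]: "ev w (tri a) xs = triangle (ev w a xs)"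
proof -
  have "(\<Sum>i<Suc m. i) = triangle m" for m by (induction m) auto
  then show ?thesis by (simp add: tri_def)
qed

lemma ev_pe[simp]: "ev w (pe a b) xs = prod_encode (ev w a xs, ev w b xs)"
  by (simp add: pe_def prod_encode_def)

lemma two_triangle: "2 * triangle m = m * Suc m"
  by (induction m) auto

lemma ev_pe2[simp]: "ev w (pe2 a b) xs = 2 * prod_encode (ev w a xs, ev w b xs)"
  by (simp add: pe2_def prod_encode_def two_triangle algebra_simps)

lemma pd_bounds: "fst (prod_decode n) \<le> n" "snd (prod_decode n) \<le> n"
  by (metis le_prod_encode_1 prod.collapse prod_decode_inverse)
     (metis le_prod_encode_2 prod.collapse prod_decode_inverse)

lemma ev_pfst0: "ev w (pfst n) xs = (let N = ev w n xs in
   if \<exists>x<N + 1. \<exists>y<N+1. 2 * N = 2 * prod_encode (x, y)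
   then LEAST x. \<exists>y<N+1. 2 * N = 2 * prod_encode (x, y) else N + 1)"
  unfolding pfst_def Let_def by (simp only: ev.simps ev_bmin ev_bex ev_beq ev_pe2 tv_simps) (simp, blast)

lemma ev_psnd0: "ev w (psnd n) xs = (let N = ev w n xs in
   if \<exists>x<N + 1. \<exists>y<N+1. 2 * N = 2 * prod_encode (y, x)
   then LEAST x. \<exists>y<N+1. 2 * N = 2 * prod_encode (y, x) else N + 1)"
  unfolding psnd_def Let_def by (simp only: ev.simps ev_bmin ev_bex ev_beq ev_pe2 tv_simps) (simp, blast)

lemma ev_pfst[simp]: "ev w (pfst n) xs = fst (prod_decode (ev w n xs))"
proof -
  define N where "N = ev w n xs"
  obtain a b where ab: "prod_decode N = (a, b)" by fastforce
  have enc: "prod_encode (a, b) = N" using ab by (metis prod_decode_inverse)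
  have bd: "a \<le> N" "b \<le> N" using pd_bounds[of N] ab by auto
  have P: "(\<exists>y<N+1. 2 * N = 2 * prod_encode (x, y)) \<longleftrightarrow> x = a" for x
  proof
    assume "\<exists>y<N+1. 2 * N = 2 * prod_encode (x, y)"
    then obtain y where "N = prod_encode (x, y)" by auto
    then show "x = a" using ab by simp
  next
    assume "x = a" then show "\<exists>y<N+1. 2 * N = 2 * prod_encode (x, y)" using enc bd by auto
  qed
  have "\<exists>x<N + 1. x = a" using bd by auto
  then show ?thesis unfolding ev_pfst0 Let_def N_def[symmetric] P using ab by (simp add: Least_equality)
qed

lemma ev_psnd[simp]: "ev w (psnd n) xs = snd (prod_decode (ev w n xs))"
proof -
  define N where "N = ev w n xs"
  obtain a b where ab: "prod_decode N = (a, b)" by fastforce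
  have enc: "prod_encode (a, b) = N" using ab by (metis prod_decode_inverse)
  have bd: "a \<le> N" "b \<le> N" using pd_bounds[of N] ab by auto
  have P: "(\<exists>y<N+1. 2 * N = 2 * prod_encode (y, x)) \<longleftrightarrow> x = b" for x
  proof
    assume "\<exists>y<N+1. 2 * N = 2 * prod_encode (y, x)"
    then obtain y where "N = prod_encode (y, x)" by auto
    then show "x = b" using ab by simp
  next
    assume "x = b" then show "\<exists>y<N+1. 2 * N = 2 * prod_encode (y, x)" using enc bd by auto
  qed
  have "\<exists>x<N + 1. x = b" using bd by auto
  then show ?thesis unfolding ev_psnd0 Let_def N_def[symmetric] P using ab by (simp add: Least_equality)
qed

definition hdc :: "nat \<Rightarrow> nat" where "hdc x = fst (prod_decode (x - 1))"
definition tlc :: "nat \<Rightarrow> nat" where "tlc x = snd (prod_decode (x - 1))"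

lemma ev_ehd[simp]: "ev w (ehd x) xs = hdc (ev w x xs)" by (simp add: ehd_def hdc_def)
lemma ev_etl[simp]: "ev w (etl x) xs = tlc (ev w x xs)" by (simp add: etl_def tlc_def)

lemma pd0: "prod_decode 0 = (0, 0)"
  by (simp add: prod_decode_def prod_decode_aux.simps)

lemma tlc_drop: "(tlc ^^ i) (list_encode l) = list_encode (drop i l)"
proof (induction i arbitrary: l)
  case 0 then show ?case by simp
next
  case (Suc i)
  have "tlc (list_encode l) = list_encode (drop 1 l)"
    by (cases l) (auto simp: tlc_def pd0)
  then show ?case using Suc[of "drop 1 l"] by (simp add: funpow_Suc_right del: funpow.simps)
qed

lemma length_list_decode_le: "length (list_decode n) \<le> n"
proof (induction n rule: list_decode.induct)
  case (2 n)
  obtain x y where "prod_decode n = (x, y)" by fastforce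
  moreover have "y \<le> n" using pd_bounds(2)[of n] calculation by simp
  ultimately show ?case using 2 by auto
qed auto

lemma ev_elen[simp]: "ev w (elen l) xs = length (list_decode (ev w l xs))"
proof -
  let ?L = "ev w l xs"
  have it: "((\<lambda>r. tlc r) ^^ i) ?L = list_encode (drop i (list_decode ?L))" for i
    using tlc_drop[of i "list_decode ?L"] by simp
  have "(((\<lambda>r. tlc r) ^^ i) ?L = 0) \<longleftrightarrow> length (list_decode ?L) \<le> i" for i
    unfolding it by (metis drop_eq_Nil list_encode.simps(1) list_encode_eq)
  moreover have "length (list_decode ?L) < Suc ?L" using length_list_decode_le[of ?L] by simp
  ultimately show ?thesis
    by (auto simp: elen_def intro!: Least_equality)
qed

lemma ev_enth[simp]: "ev w (enth l i) xs = hdc ((tlc ^^ ev w i xs) (ev w l xs))"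
proof -
  have "(\<lambda>r. tlc r) = tlc" by auto
  then show ?thesis by (simp add: enth_def)
qed

lemma hdc_nth: "i < length (list_decode l) \<Longrightarrow> hdc ((tlc ^^ i) l) = list_decode l ! i"
proof -
  assume i: "i < length (list_decode l)"
  have "(tlc ^^ i) l = list_encode (drop i (list_decode l))"
    using tlc_drop[of i "list_decode l"] by simp
  moreover obtain a r where "drop i (list_decode l) = a # r" "list_decode l ! i = a"
    using i by (metis Cons_nth_drop_Suc)
  ultimately show ?thesis by (simp add: hdc_def)
qed

lemma ev_half[simp]: "ev w (half x) xs = ev w x xs div 2"
proof -
  let ?X = "ev w x xs"
  have "(LEAST i. ?X < 2 * Suc i) = ?X div 2"
    by (rule Least_equality) auto
  then show ?thesis by (auto simp: half_def)
qed

definition zpf :: "nat \<Rightarrow> nat" where "zpf x = (if even x then x div 2 else 0)"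
definition znf :: "nat \<Rightarrow> nat" where "znf x = (if even x then 0 else x div 2 + 1)"

lemma two_div_eq: "(2 * (x div 2) = (x::nat)) \<longleftrightarrow> even x"
  by presburger

lemma ev_zp[simp]: "ev w (zp x) xs = zpf (ev w x xs)"
  unfolding zp_def zpf_def by (simp add: two_div_eq)
lemma ev_zn[simp]: "ev w (zn x) xs = znf (ev w x xs)"
  unfolding zn_def znf_def by (simp add: two_div_eq)

lemma int_decode_zpn: "int_decode x = int (zpf x) - int (znf x)"
  by (auto simp: int_decode_def sum_decode_def zpf_def znf_def)

lemma ev_lift0[simp]: "ev w (lift 0 e) (y # xs) = ev w e xs"
  using ev_lift[of 0 xs w e y] by simp

abbreviation "l0 \<equiv> lift 0"

definition nthc :: "nat \<Rightarrow> nat \<Rightarrow> nat" where "nthc l j = hdc ((tlc ^^ j) l)"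
definition lenc :: "nat \<Rightarrow> nat" where "lenc l = length (list_decode l)"
definition pf :: "nat \<Rightarrow> nat" where "pf x = fst (prod_decode x)"
definition ps :: "nat \<Rightarrow> nat" where "ps x = snd (prod_decode x)"

lemma ev_enth'[simp]: "ev w (enth l i) xs = nthc (ev w l xs) (ev w i xs)"
  by (simp add: nthc_def)
lemma ev_elen'[simp]: "ev w (elen l) xs = lenc (ev w l xs)"
  by (simp add: lenc_def)
lemma ev_pfst'[simp]: "ev w (pfst l) xs = pf (ev w l xs)"
  by (simp add: pf_def)
lemma ev_psnd'[simp]: "ev w (psnd l) xs = ps (ev w l xs)"
  by (simp add: ps_def)

declare ev_enth[simp del] ev_elen[simp del] ev_pfst[simp del] ev_psnd[simp del]

definition isSumN :: "nat \<Rightarrow> nat \<Rightarrow> nat \<Rightarrow> nat \<Rightarrow> bool" where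
  "isSumN d xc vc jc \<longleftrightarrow> lenc xc = d \<and> (\<forall>t<d.
     zpf (nthc xc t) + (znf (nthc vc t) + znf (nthc jc t)) =
     zpf (nthc vc t) + (zpf (nthc jc t) + znf (nthc xc t)))"

definition "isSumE d xc vc jc = band (beq (elen xc) (K d)) (ball (K d)
   (beq (Plus (zp (enth (l0 xc) (V 0))) (Plus (zn (enth (l0 vc) (V 0))) (zn (enth (l0 jc) (V 0)))))
        (Plus (zp (enth (l0 vc) (V 0))) (Plus (zp (enth (l0 jc) (V 0))) (zn (enth (l0 xc) (V 0)))))))"

lemma ev_isSumE[simp]: "ev w (isSumE d xc vc jc) xs = tv (isSumN d (ev w xc xs) (ev w vc xs) (ev w jc xs))"
  by (simp add: isSumE_def isSumN_def)

definition legalN :: "nat \<Rightarrow> nat \<Rightarrow> nat \<Rightarrow> nat \<Rightarrow> nat \<Rightarrow> bool" where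
  "legalN k d vc jc mc \<longleftrightarrow> mc \<noteq> 0 \<and> isSumN d (pf (mc - 1)) vc jc \<and> ps (mc - 1) < k"

definition "legalE k d vc jc mc = band (sg mc) (band (isSumE d (pfst (Monus mc (K 1))) vc jc) (blt (psnd (Monus mc (K 1))) k))"

lemma ev_legalE[simp]: "ev w (legalE k d vc jc mc) xs = tv (legalN (ev w k xs) d (ev w vc xs) (ev w jc xs) (ev w mc xs))"
  by (simp add: legalE_def legalN_def)

definition cfgHasN :: "nat \<Rightarrow> nat \<Rightarrow> nat \<Rightarrow> nat \<Rightarrow> nat \<Rightarrow> nat \<Rightarrow> bool" where
  "cfgHasN k d hc vc jc col \<longleftrightarrow> (\<exists>idx < lenc hc. legalN k d vc jc (nthc hc idx) \<and> ps (nthc hc idx - 1) = col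
     \<and> (\<forall>idx2 < lenc hc. idx2 \<le> idx \<or> \<not> legalN k d vc jc (nthc hc idx2)))"

definition "cfgHasE k d hc vc jc col = bex (elen hc)
  (band (legalE (l0 k) d (l0 vc) (l0 jc) (enth (l0 hc) (V 0)))
   (band (beq (psnd (Monus (enth (l0 hc) (V 0)) (K 1))) (l0 col))
     (ball (elen (l0 hc)) (bor (ble (V 0) (V 1))
        (bnot (legalE (l0 (l0 k)) d (l0 (l0 vc)) (l0 (l0 jc)) (enth (l0 (l0 hc)) (V 0))))))))"

lemma ev_cfgHasE[simp]: "ev w (cfgHasE k d hc vc jc col) xs =
   tv (cfgHasN (ev w k xs) d (ev w hc xs) (ev w vc xs) (ev w jc xs) (ev w col xs))"
  by (simp add: cfgHasE_def cfgHasN_def) (intro arg_cong[where f=tv], blast)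

definition WN :: "nat \<Rightarrow> nat \<Rightarrow> nat \<Rightarrow> nat \<Rightarrow> nat \<Rightarrow> bool" where
  "WN k d Fc hc wc \<longleftrightarrow> wc \<noteq> 0 \<and> pf (wc - 1) < lenc Fc \<and> lenc (ps (wc - 1)) = d \<and>
     (\<forall>a < lenc (nthc Fc (pf (wc - 1))).
        cfgHasN k d hc (ps (wc - 1)) (pf (nthc (nthc Fc (pf (wc - 1))) a)) (ps (nthc (nthc Fc (pf (wc - 1))) a)))"

definition "WE k d Fc hc wc = band (sg wc) (Lt (Monus wc (K 1))
  (band (blt (pfst (V 0)) (elen (l0 Fc))) (band (beq (elen (psnd (V 0))) (K d))
    (Lt (enth (l0 Fc) (pfst (V 0)))
      (ball (elen (V 0))
        (cfgHasE (l0 (l0 (l0 k))) d (l0 (l0 (l0 hc))) (psnd (V 2)) (pfst (enth (V 1) (V 0))) (psnd (enth (V 1) (V 0)))))))))"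

lemma ev_WE[simp]: "ev w (WE k d Fc hc wc) xs = tv (WN (ev w k xs) d (ev w Fc xs) (ev w hc xs) (ev w wc xs))"
  by (simp add: WE_def WN_def) (intro arg_cong[where f=tv], blast)

definition inLN :: "nat \<Rightarrow> nat \<Rightarrow> bool" where
  "inLN Lc x \<longleftrightarrow> (\<exists>j < lenc Lc. pf (nthc Lc j) = x)"

definition "inLE Lc x = bex (elen Lc) (beq (pfst (enth (l0 Lc) (V 0))) (l0 x))"

lemma ev_inLE[simp]: "ev w (inLE Lc x) xs = tv (inLN (ev w Lc xs) (ev w x xs))"
  by (simp add: inLE_def inLN_def)

definition "pcE h m = Plus (K 1) (pe m h)"

lemma ev_pcE[simp]: "ev w (pcE h m) xs = Suc (prod_encode (ev w m xs, ev w h xs))"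
  by (simp add: pcE_def)

definition succAN :: "nat \<Rightarrow> nat \<Rightarrow> nat \<Rightarrow> nat \<Rightarrow> bool" where
  "succAN k Rc Lc hc \<longleftrightarrow> inLN Lc (Suc (prod_encode (0, hc))) \<or>
     (\<exists>ri < lenc Rc. \<exists>a < k. inLN Lc (Suc (prod_encode (Suc (prod_encode (nthc Rc ri, a)), hc))))"

definition succBN :: "nat \<Rightarrow> nat \<Rightarrow> nat \<Rightarrow> nat \<Rightarrow> bool" where
  "succBN k Rc Lc hc \<longleftrightarrow> inLN Lc (Suc (prod_encode (0, hc))) \<and>
     (\<forall>ri < lenc Rc. \<forall>a < k. inLN Lc (Suc (prod_encode (Suc (prod_encode (nthc Rc ri, a)), hc))))"

definition "succAE k Rc Lc hc = bor (inLE Lc (pcE hc (K 0)))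
  (bex (elen Rc) (bex (l0 k) (inLE (l0 (l0 Lc)) (pcE (l0 (l0 hc)) (Plus (K 1) (pe (enth (l0 (l0 Rc)) (V 1)) (V 0)))))))"

definition "succBE k Rc Lc hc = band (inLE Lc (pcE hc (K 0)))
  (ball (elen Rc) (ball (l0 k) (inLE (l0 (l0 Lc)) (pcE (l0 (l0 hc)) (Plus (K 1) (pe (enth (l0 (l0 Rc)) (V 1)) (V 0)))))))"

lemma ev_succAE[simp]: "ev w (succAE k Rc Lc hc) xs = tv (succAN (ev w k xs) (ev w Rc xs) (ev w Lc xs) (ev w hc xs))"
  by (simp add: succAE_def succAN_def)

lemma ev_succBE[simp]: "ev w (succBE k Rc Lc hc) xs = tv (succBN (ev w k xs) (ev w Rc xs) (ev w Lc xs) (ev w hc xs))"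
  by (simp add: succBE_def succBN_def)

definition entryN :: "(nat \<Rightarrow> nat) \<Rightarrow> nat \<Rightarrow> nat \<Rightarrow> nat \<Rightarrow> nat \<Rightarrow> nat \<Rightarrow> nat \<Rightarrow> bool" where
  "entryN w k d Fc Rc Lc e \<longleftrightarrow> WN k d Fc (pf e) (ps e) \<or>
     (w (lenc (pf e)) = 0 \<and> succAN k Rc Lc (pf e)) \<or>
     (w (lenc (pf e)) \<noteq> 0 \<and> succBN k Rc Lc (pf e))"

definition "entryE k d Fc Rc Lc e = Lt e (bor (WE (l0 k) d (l0 Fc) (pfst (V 0)) (psnd (V 0)))
   (bor (band (beq (Sw (elen (pfst (V 0)))) (K 0)) (succAE (l0 k) (l0 Rc) (l0 Lc) (pfst (V 0))))
        (band (sg (Sw (elen (pfst (V 0))))) (succBE (l0 k) (l0 Rc) (l0 Lc) (pfst (V 0))))))"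

lemma ev_entryE[simp]: "ev w (entryE k d Fc Rc Lc e) xs =
   tv (entryN w (ev w k xs) d (ev w Fc xs) (ev w Rc xs) (ev w Lc xs) (ev w e xs))"
  by (simp add: entryE_def entryN_def)

definition validN :: "nat \<Rightarrow> nat \<Rightarrow> nat \<Rightarrow> bool" where
  "validN k d Fc \<longleftrightarrow> (\<forall>qi < lenc Fc.
     (\<forall>a < lenc (nthc Fc qi). \<forall>b < lenc (nthc Fc qi). a = b \<or> pf (nthc (nthc Fc qi) a) \<noteq> pf (nthc (nthc Fc qi) b)) \<and>
     (\<forall>a < lenc (nthc Fc qi). lenc (pf (nthc (nthc Fc qi) a)) = d \<and> ps (nthc (nthc Fc qi) a) < k))"

definition "validE k d Fc = ball (elen Fc) (Lt (enth (l0 Fc) (V 0))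
   (band (ball (elen (V 0)) (ball (elen (V 1)) (bor (beq (V 0) (V 1)) (bnot (beq (pfst (enth (V 2) (V 1))) (pfst (enth (V 2) (V 0))))))))
         (ball (elen (V 0)) (band (beq (elen (pfst (enth (V 1) (V 0)))) (K d)) (blt (psnd (enth (V 1) (V 0))) (l0 (l0 (l0 k))))))))"

lemma ev_validE[simp]: "ev w (validE k d Fc) xs = tv (validN (ev w k xs) d (ev w Fc xs))"
  by (simp add: validE_def validN_def) (intro arg_cong[where f=tv], blast)

definition ChkN :: "(nat \<Rightarrow> nat) \<Rightarrow> nat \<Rightarrow> nat \<Rightarrow> nat \<Rightarrow> bool" where
  "ChkN w d c n \<longleftrightarrow> validN (pf n) d (ps n) \<and> inLN (ps c) 0 \<and>
     (\<forall>i < lenc (ps c). entryN w (pf n) d (ps n) (pf c) (ps c) (nthc (ps c) i))"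

definition "ChkE d = Lt (pfst (V 1)) (Lt (psnd (V 2)) (Lt (pfst (V 2)) (Lt (psnd (V 3))
   (band (validE (V 3) d (V 2)) (band (inLE (V 0) (K 0))
      (ball (elen (V 0)) (entryE (V 4) d (V 3) (V 2) (V 1) (enth (V 1) (V 0)))))))))"

lemma ev_ChkE: "ev w (ChkE d) [c, n] = tv (ChkN w d c n)"
  by (simp add: ChkE_def ChkN_def)

lemma re_from_chk:
  assumes cw: "computable_word s"
    and eq: "\<And>n. n \<in> S \<longleftrightarrow> (\<exists>c. ChkN (\<lambda>i. if s i = PlA then 0 else 1) d c n)"
  shows "rec_enum S"
proof -
  define w where "w = (\<lambda>i. if s i = PlA then 0 else (1::nat))"
  obtain fs where fs: "\<And>i. eval fs [i] (w i)" using cw unfolding computable_word_def w_def by blast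
  define g where "g = cmpl fs (bnot (ChkE d)) 2"
  have ge: "eval g [c, n] (tv (\<not> ChkN w d c n))" for c n
    using comp_correct[OF fs, of "[c, n]" 2 "bnot (ChkE d)"] by (simp add: g_def ev_ChkE)
  have "n \<in> S \<longleftrightarrow> (\<exists>y. eval (Mn g) [n] y)" for n
  proof
    assume "n \<in> S"
    then have ex: "\<exists>c. ChkN w d c n" using eq w_def by simp
    define c0 where "c0 = (LEAST c. ChkN w d c n)"
    have c0: "ChkN w d c0 n" using ex unfolding c0_def by (rule LeastI_ex)
    have lt: "\<not> ChkN w d m n" if "m < c0" for m using that not_less_Least c0_def by blast
    have "eval (Mn g) [n] c0"
    proof (rule eval_Mn)
      show "eval g [c0, n] 0" using ge[of c0 n] c0 by (simp add: tv_def)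
      show "\<forall>m<c0. \<exists>r. eval g [m, n] r \<and> r \<noteq> 0"
        using ge lt by (metis tv_simps(1))
    qed
    then show "\<exists>y. eval (Mn g) [n] y" by blast
  next
    assume "\<exists>y. eval (Mn g) [n] y"
    then obtain y where "eval (Mn g) [n] y" by blast
    then have "eval g [y, n] 0" by (cases rule: eval.cases) auto
    then have "tv (\<not> ChkN w d y n) = 0" using ge[of y n] eval_det by blast
    then show "n \<in> S" using eq w_def by auto
  qed
  then show ?thesis unfolding rec_enum_def by blast
qed

definition pat :: "nat \<Rightarrow> fpattern list \<Rightarrow> config \<Rightarrow> bool" where
  "pat d F c \<longleftrightarrow> (\<exists>q\<in>set F. appears d (map_of q) c)"

definition MR :: "nat \<Rightarrow> cell set \<Rightarrow> move set" where
  "MR k R = {Pass} \<union> {Put x a | x a. x \<in> R \<and> a < k}"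

definition okG where
  "okG s k d F R L h \<longleftrightarrow> pat d F (config_of k d h) \<or>
     (s (length h) = PlA \<and> (\<exists>m\<in>MR k R. h @ [m] \<in> L)) \<or>
     (s (length h) = PlB \<and> (\<forall>m\<in>MR k R. h @ [m] \<in> L))"

definition ClosedG where "ClosedG s k d F R L \<longleftrightarrow> (\<forall>h\<in>L. okG s k d F R L h)"

lemma config_snoc[simp]: "config_of k d (h @ [m]) = apply_move k d (config_of k d h) m"
  by (simp add: config_of_def)

lemma config_Nil[simp]: "config_of k d [] = Map.empty"
  by (simp add: config_of_def)

lemma length_history[simp]: "length (history s sA sB i) = i"
  by (induction i) auto

lemma appears_mono: "appears d q P \<Longrightarrow> P \<subseteq>\<^sub>m C \<Longrightarrow> appears d q C"
  unfolding appears_def map_le_def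
  by (metis domD domI)

lemma pat_mono: "pat d F P \<Longrightarrow> P \<subseteq>\<^sub>m C \<Longrightarrow> pat d F C"
  unfolding pat_def using appears_mono by blast

lemma MR_mono: "R \<subseteq> R' \<Longrightarrow> MR k R \<subseteq> MR k R'"
  unfolding MR_def by blast

lemma finite_MR: "finite R \<Longrightarrow> finite (MR k R)"
proof -
  assume "finite R"
  then have "finite ((\<lambda>(x, a). Put x a) ` (R \<times> {..<k}))" by auto
  moreover have "{Put x a | x a. x \<in> R \<and> a < k} = (\<lambda>(x, a). Put x a) ` (R \<times> {..<k})" by auto
  ultimately show ?thesis unfolding MR_def by auto
qed

section \<open>Soundness\<close>

definition proj :: "nat \<Rightarrow> cell set \<Rightarrow> move \<Rightarrow> move" where
  "proj k R m = (if m \<in> MR k R then m else Pass)"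

lemma proj_MR: "proj k R m \<in> MR k R"
  by (simp add: proj_def MR_def)

lemma proj_inv:
  "(\<forall>y\<in>R. config_of k d (map (proj k R) h) y = config_of k d h y) \<and>
   (\<forall>y. y \<notin> R \<longrightarrow> config_of k d (map (proj k R) h) y = None)"
proof (induction h rule: rev_induct)
  case Nil then show ?case by simp
next
  case (snoc m h)
  let ?P = "config_of k d (map (proj k R) h)" and ?C = "config_of k d h"
  show ?case
  proof (cases "m \<in> MR k R")
    case True
    then have pm: "proj k R m = m" by (simp add: proj_def)
    show ?thesis
    proof (cases m)
      case Pass then show ?thesis using snoc pm by (simp add: apply_move_def)
    next
      case (Put x a)
      then have "x \<in> R" using True by (auto simp: MR_def)
      then have "?P x = ?C x" using snoc by auto
      then show ?thesis using snoc pm Put \<open>x \<in> R\<close> by (auto simp: apply_move_def)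
    qed
  next
    case False
    then have pm: "proj k R m = Pass" by (simp add: proj_def)
    show ?thesis
    proof (cases m)
      case Pass then show ?thesis using False by (simp add: MR_def)
    next
      case (Put x a)
      show ?thesis
      proof (cases "x \<in> R")
        case True
        then have "\<not> a < k" using False Put by (auto simp: MR_def)
        then show ?thesis using snoc pm Put by (auto simp: apply_move_def)
      next
        case False
        then show ?thesis using snoc pm Put by (auto simp: apply_move_def)
      qed
    qed
  qed
qed

lemma proj_le: "config_of k d (map (proj k R) h) \<subseteq>\<^sub>m config_of k d h"
  using proj_inv[of R k d h] unfolding map_le_def
  by (metis domIff option.distinct(1))

theorem soundG:
  assumes fin: "finite L" and e: "[] \<in> L" and cl: "ClosedG s k d F R L"
  shows "A_has_winning_strategy k d F s"
proof -
  define sA where "sA = (\<lambda>hist. if \<exists>m\<in>MR k R. map (proj k R) hist @ [m] \<in> L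
      then SOME m. m \<in> MR k R \<and> map (proj k R) hist @ [m] \<in> L else Pass)"
  have "A_wins_play k d F s sA sB" for sB
  proof -
    let ?H = "history s sA sB"
    have inv: "(\<exists>j\<le>i. pat d F (config_of k d (?H j))) \<or> map (proj k R) (?H i) \<in> L" for i
    proof (induction i)
      case 0 then show ?case using e by simp
    next
      case (Suc i)
      show ?case
      proof (cases "\<exists>j\<le>i. pat d F (config_of k d (?H j))")
        case True then show ?thesis using le_SucI by blast
      next
        case False
        let ?p = "map (proj k R) (?H i)"
        have pL: "?p \<in> L" using Suc False by blast
        have np: "\<not> pat d F (config_of k d ?p)"
          using False pat_mono[OF _ proj_le] by blast
        have lp: "length ?p = i" by simp
        from cl pL np have cases: "(s i = PlA \<and> (\<exists>m\<in>MR k R. ?p @ [m] \<in> L)) \<or>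
             (s i = PlB \<and> (\<forall>m\<in>MR k R. ?p @ [m] \<in> L))"
          unfolding ClosedG_def okG_def using lp by metis
        then show ?thesis
        proof
          assume A: "s i = PlA \<and> (\<exists>m\<in>MR k R. ?p @ [m] \<in> L)"
          then have ex: "\<exists>m. m \<in> MR k R \<and> ?p @ [m] \<in> L" by blast
          have "sA (?H i) = (SOME m. m \<in> MR k R \<and> ?p @ [m] \<in> L)"
            using A unfolding sA_def by simp
          then have "sA (?H i) \<in> MR k R \<and> ?p @ [sA (?H i)] \<in> L"
            using someI_ex[OF ex] by simp
          moreover have "?H (Suc i) = ?H i @ [sA (?H i)]" using A by simp
          moreover have "proj k R (sA (?H i)) = sA (?H i)" using calculation(1) by (simp add: proj_def)
          ultimately show ?thesis by simp
        next
          assume B: "s i = PlB \<and> (\<forall>m\<in>MR k R. ?p @ [m] \<in> L)"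
          have "?H (Suc i) = ?H i @ [sB (?H i)]" using B by simp
          then show ?thesis using B proj_MR by simp
        qed
      qed
    qed
    define N where "N = Suc (Max (length ` L))"
    have "map (proj k R) (?H N) \<notin> L"
    proof
      assume "map (proj k R) (?H N) \<in> L"
      then have "length (map (proj k R) (?H N)) \<in> length ` L" by (rule imageI)
      then have "length (map (proj k R) (?H N)) \<le> Max (length ` L)" using fin by (intro Max_ge) auto
      then show False by (simp add: N_def)
    qed
    then obtain j where "pat d F (config_of k d (?H j))" using inv[of N] by blast
    then show ?thesis unfolding A_wins_play_def pat_def by blast
  qed
  then show ?thesis unfolding A_has_winning_strategy_def by blast
qed

inductive WinR for s k d F R where
  wpat: "pat d F (config_of k d h) \<Longrightarrow> WinR s k d F R h"
| wA: "s (length h) = PlA \<Longrightarrow> m \<in> MR k R \<Longrightarrow> WinR s k d F R (h @ [m]) \<Longrightarrow> WinR s k d F R h"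
| wB: "s (length h) = PlB \<Longrightarrow> (\<forall>m\<in>MR k R. WinR s k d F R (h @ [m])) \<Longrightarrow> WinR s k d F R h"

definition Sim where
  "Sim k d R h h' \<longleftrightarrow> length h = length h' \<and> config_of k d h \<subseteq>\<^sub>m config_of k d h' \<and>
     (\<forall>y\<in>R. config_of k d h' y = config_of k d h y)"

lemma Sim_refl: "Sim k d R h h"
  by (simp add: Sim_def)

lemma Sim_step: "Sim k d R h h' \<Longrightarrow> m \<in> MR k R \<Longrightarrow> Sim k d R (h @ [m]) (h' @ [m])"
proof -
  assume S: "Sim k d R h h'" and m: "m \<in> MR k R"
  show ?thesis
  proof (cases m)
    case Pass then show ?thesis using S by (simp add: Sim_def apply_move_def)
  next
    case (Put x a)
    then have xR: "x \<in> R" using m by (auto simp: MR_def)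
    then have eq: "config_of k d h' x = config_of k d h x" using S by (simp add: Sim_def)
    show ?thesis using S Put eq xR unfolding Sim_def map_le_def
      by (auto simp: apply_move_def)
  qed
qed

lemma Sim_out: "Sim k d R h h' \<Longrightarrow> x \<notin> R \<Longrightarrow> Sim k d R (h @ [Pass]) (h' @ [Put x a])"
proof -
  assume S: "Sim k d R h h'" and x: "x \<notin> R"
  have "config_of k d h x = None" if "config_of k d h' x = None"
    using S that unfolding Sim_def map_le_def by (metis domIff option.distinct(1))
  then show ?thesis using S x unfolding Sim_def map_le_def
    by (auto simp: apply_move_def)
qed

lemma WinR_sim: "WinR s k d F R h \<Longrightarrow> \<forall>h'. Sim k d R h h' \<longrightarrow> WinR s k d F R' h'" if RR: "R \<subseteq> R'"
proof (induction h rule: WinR.induct)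
  case (wpat h)
  show ?case
  proof (intro allI impI)
    fix h' assume "Sim k d R h h'"
    then have "pat d F (config_of k d h')" using wpat pat_mono by (auto simp: Sim_def)
    then show "WinR s k d F R' h'" by (rule WinR.wpat)
  qed
next
  case (wA h m)
  show ?case
  proof (intro allI impI)
    fix h' assume S: "Sim k d R h h'"
    have S2: "Sim k d R (h @ [m]) (h' @ [m])" using Sim_step[OF S wA.hyps(2)] .
    have w: "WinR s k d F R' (h' @ [m])" using wA.IH S2 by blast
    have m: "m \<in> MR k R'" using wA.hyps(2) MR_mono[OF RR] by blast
    have l: "s (length h') = PlA" using wA.hyps(1) S by (simp add: Sim_def)
    show "WinR s k d F R' h'" using WinR.wA[OF l m w] .
  qed
next
  case (wB h)
  show ?case
  proof (intro allI impI)
    fix h' assume S: "Sim k d R h h'"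
    have "WinR s k d F R' (h' @ [m'])" if m': "m' \<in> MR k R'" for m'
    proof (cases "m' \<in> MR k R")
      case True
      have S2: "Sim k d R (h @ [m']) (h' @ [m'])" using Sim_step[OF S True] .
      then show ?thesis using wB.IH True by blast
    next
      case False
      then obtain x a where xa: "m' = Put x a" "x \<notin> R" using m' by (auto simp: MR_def)
      have P: "Pass \<in> MR k R" by (simp add: MR_def)
      have S2: "Sim k d R (h @ [Pass]) (h' @ [m'])" using Sim_out[OF S xa(2)] xa(1) by simp
      then show ?thesis using wB.IH P by blast
    qed
    moreover have "s (length h') = PlB" using wB.hyps(1) S by (simp add: Sim_def)
    ultimately show "WinR s k d F R' h'" by (intro WinR.wB) auto
  qed
qed

lemma WinR_sim': "WinR s k d F R h \<Longrightarrow> Sim k d R h h' \<Longrightarrow> R \<subseteq> R' \<Longrightarrow> WinR s k d F R' h'"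
  using WinR_sim by blast

lemma WinR_mono: "WinR s k d F R h \<Longrightarrow> R \<subseteq> R' \<Longrightarrow> WinR s k d F R' h"
  using WinR_sim' Sim_refl by blast

lemma win_UNIV:
  assumes "A_has_winning_strategy k d F s"
  shows "WinR s k d F UNIV []"
proof (rule ccontr)
  assume nw: "\<not> WinR s k d F UNIV []"
  obtain sA where sA: "\<And>sB. A_wins_play k d F s sA sB"
    using assms unfolding A_has_winning_strategy_def by blast
  define sB where "sB = (\<lambda>h. if \<exists>m\<in>MR k UNIV. \<not> WinR s k d F UNIV (h @ [m])
     then SOME m. m \<in> MR k UNIV \<and> \<not> WinR s k d F UNIV (h @ [m]) else Pass)"
  let ?H = "history s sA sB"
  have inv: "\<not> WinR s k d F UNIV (?H i)" for i
  proof (induction i)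
    case 0 then show ?case using nw by simp
  next
    case (Suc i)
    show ?case
    proof (cases "s i")
      case PlB
      then have "\<exists>m\<in>MR k UNIV. \<not> WinR s k d F UNIV (?H i @ [m])"
        using Suc WinR.wB[where h="?H i" and R=UNIV and s=s and k=k and d=d and F=F] by auto
      then have ex: "\<exists>m. m \<in> MR k UNIV \<and> \<not> WinR s k d F UNIV (?H i @ [m])" by blast
      have "sB (?H i) = (SOME m. m \<in> MR k UNIV \<and> \<not> WinR s k d F UNIV (?H i @ [m]))"
        using ex unfolding sB_def by auto
      then have "\<not> WinR s k d F UNIV (?H i @ [sB (?H i)])" using someI_ex[OF ex] by simp
      then show ?thesis using PlB by simp
    next
      case PlA
      let ?m = "sA (?H i)"
      have Hs: "?H (Suc i) = ?H i @ [?m]" using PlA by simp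
      show ?thesis
      proof (cases "?m \<in> MR k UNIV")
        case True
        then show ?thesis using Hs Suc PlA WinR.wA[where h="?H i" and m="?m" and R=UNIV and s=s and k=k and d=d and F=F] by auto
      next
        case False
        then obtain x a where xa: "?m = Put x a" "\<not> a < k" by (cases ?m) (auto simp: MR_def)
        have "Pass \<in> MR k UNIV" by (simp add: MR_def)
        then have np: "\<not> WinR s k d F UNIV (?H i @ [Pass])" using Suc PlA WinR.wA[where h="?H i" and m=Pass and R=UNIV and s=s and k=k and d=d and F=F] by auto
        have "Sim k d UNIV (?H i @ [?m]) (?H i @ [Pass])"
          using xa by (simp add: Sim_def apply_move_def)
        then show ?thesis using np Hs WinR_sim'[of s k d F UNIV "?H i @ [?m]" "?H i @ [Pass]" UNIV] by auto
      qed
    qed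
  qed
  obtain i where "pat d F (config_of k d (?H i))"
    using sA[of sB] unfolding A_wins_play_def pat_def by blast
  then show False using inv[of i] WinR.wpat by blast
qed

fun cellset :: "move \<Rightarrow> cell set" where
  "cellset Pass = {}" | "cellset (Put x a) = {x}"

lemma win_finite: "WinR s k d F UNIV h \<Longrightarrow> \<exists>R. finite R \<and> WinR s k d F R h"
proof (induction h rule: WinR.induct)
  case (wpat h)
  then show ?case using WinR.wpat by blast
next
  case (wA h m)
  then obtain R0 where R0: "finite R0" "WinR s k d F R0 (h @ [m])" by blast
  define R where "R = R0 \<union> cellset m"
  have fin: "finite R" using R0(1) by (cases m) (auto simp: R_def)
  have mR: "m \<in> MR k R"
  proof (cases m)
    case Pass then show ?thesis by (simp add: MR_def)
  next
    case (Put x a)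
    then have "a < k" using wA.hyps(2) by (simp add: MR_def)
    then show ?thesis using Put by (simp add: MR_def R_def)
  qed
  have w: "WinR s k d F R (h @ [m])" using WinR_mono[OF R0(2)] by (simp add: R_def)
  show ?case using WinR.wA[where s=s and h=h and R=R, OF wA.hyps(1) mR w] fin by blast
next
  case (wB h)
  define f where "f = (\<lambda>m. SOME R. finite R \<and> WinR s k d F R (h @ [m]))"
  have f: "finite (f m) \<and> WinR s k d F (f m) (h @ [m])" if "m \<in> MR k UNIV" for m
  proof -
    have "\<exists>R. finite R \<and> WinR s k d F R (h @ [m])" using wB.IH that by blast
    then show ?thesis unfolding f_def by (rule someI_ex)
  qed
  have P: "Pass \<in> MR k UNIV" by (simp add: MR_def)
  define R0 where "R0 = f Pass"
  define R where "R = R0 \<union> (\<Union>xa\<in>R0 \<times> {..<k}. f (Put (fst xa) (snd xa)))"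
  have fR0: "finite R0" using f[OF P] R0_def by simp
  have fPut: "finite (f (Put x a))" if "a < k" for x a
    using f[of "Put x a"] that by (simp add: MR_def)
  have "finite R"
    unfolding R_def using fR0 fPut by (intro finite_UnI finite_UN_I) auto
  moreover have "WinR s k d F R (h @ [m])" if m: "m \<in> MR k R" for m
  proof -
    have w0: "WinR s k d F R0 (h @ [Pass])" using f[OF P] R0_def by simp
    have R0R: "R0 \<subseteq> R" by (simp add: R_def)
    show ?thesis
    proof (cases m)
      case Pass
      then show ?thesis using WinR_mono[OF w0 R0R] by simp
    next
      case (Put x a)
      then have ak: "a < k" using m by (simp add: MR_def)
      show ?thesis
      proof (cases "x \<in> R0")
        case True
        then have "(x, a) \<in> R0 \<times> {..<k}" using ak by simp
        then have "f (Put (fst (x, a)) (snd (x, a))) \<subseteq> (\<Union>xa\<in>R0 \<times> {..<k}. f (Put (fst xa) (snd xa)))"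
          by (rule UN_upper)
        then have "f (Put x a) \<subseteq> R" unfolding R_def by auto
        moreover have "WinR s k d F (f m) (h @ [m])" using f[of m] Put ak by (simp add: MR_def)
        ultimately show ?thesis using WinR_mono Put by blast
      next
        case False
        have "Sim k d R0 (h @ [Pass]) (h @ [Put x a])" using Sim_out[OF Sim_refl False] by simp
        then show ?thesis using WinR_sim'[OF w0 _ R0R] Put by simp
      qed
    qed
  qed
  ultimately show ?case using WinR.wB[where s=s and h=h and R=R, OF wB.hyps(1)] by blast
qed

lemma okG_mono: "okG s k d F R L h \<Longrightarrow> L \<subseteq> L' \<Longrightarrow> okG s k d F R L' h"
  unfolding okG_def by blast

lemma win_cert: "WinR s k d F R h \<Longrightarrow> finite R \<Longrightarrow> \<exists>L. finite L \<and> h \<in> L \<and> ClosedG s k d F R L"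
proof (induction h rule: WinR.induct)
  case (wpat h)
  have "okG s k d F R {h} h" using wpat.hyps unfolding okG_def by blast
  then show ?case unfolding ClosedG_def by (intro exI[of _ "{h}"]) simp
next
  case (wA h m)
  then obtain L0 where L0: "finite L0" "h @ [m] \<in> L0" "ClosedG s k d F R L0" by blast
  let ?L = "insert h L0"
  have "okG s k d F R ?L h" using wA.hyps(1,2) L0(2) unfolding okG_def by blast
  moreover have "okG s k d F R ?L g" if "g \<in> L0" for g
  proof -
    have "okG s k d F R L0 g" using L0(3) that unfolding ClosedG_def by blast
    then show ?thesis by (rule okG_mono) blast
  qed
  ultimately have "ClosedG s k d F R ?L" unfolding ClosedG_def by blast
  then show ?case using L0(1) by blast
next
  case (wB h)
  define f where "f = (\<lambda>m. SOME L. finite L \<and> h @ [m] \<in> L \<and> ClosedG s k d F R L)"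
  have f: "finite (f m) \<and> h @ [m] \<in> f m \<and> ClosedG s k d F R (f m)" if "m \<in> MR k R" for m
  proof -
    have "\<exists>L. finite L \<and> h @ [m] \<in> L \<and> ClosedG s k d F R L" using wB.IH wB.prems that by blast
    then show ?thesis unfolding f_def by (rule someI_ex)
  qed
  let ?U = "(\<Union>m\<in>MR k R. f m)"
  let ?L = "insert h ?U"
  have "finite ?U" using f finite_MR[OF wB.prems] by (intro finite_UN_I) auto
  then have "finite ?L" by simp
  moreover have "okG s k d F R ?L h"
  proof -
    have "\<forall>m\<in>MR k R. h @ [m] \<in> ?L" using f by blast
    then show ?thesis using wB.hyps unfolding okG_def by blast
  qed
  moreover have "okG s k d F R ?L g" if "m \<in> MR k R" "g \<in> f m" for g m
  proof -
    have "okG s k d F R (f m) g" using f[OF that(1)] that(2) unfolding ClosedG_def by blast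
    then show ?thesis by (rule okG_mono) (use that in blast)
  qed
  ultimately have "finite ?L \<and> h \<in> ?L \<and> ClosedG s k d F R ?L" unfolding ClosedG_def by blast
  then show ?case by blast
qed

theorem complG:
  assumes "A_has_winning_strategy k d F s"
  shows "\<exists>R L. finite R \<and> finite L \<and> [] \<in> L \<and> ClosedG s k d F R L"
proof -
  obtain R where R: "finite R" "WinR s k d F R []" using win_finite[OF win_UNIV[OF assms]] by blast
  obtain L where "finite L" "[] \<in> L" "ClosedG s k d F R L" using win_cert[OF R(2) R(1)] by blast
  then show ?thesis using R(1) by blast
qed

definition dcell :: "nat \<Rightarrow> cell" where "dcell x = map int_decode (list_decode x)"
definition dmove :: "nat \<Rightarrow> move" where
  "dmove m = (if m = 0 then Pass else Put (dcell (pf (m - 1))) (ps (m - 1)))"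
definition hdec :: "nat \<Rightarrow> move list" where "hdec h = map dmove (list_decode h)"

definition ecell :: "cell \<Rightarrow> nat" where "ecell x = list_encode (map int_encode x)"
fun emove :: "move \<Rightarrow> nat" where
  "emove Pass = 0" | "emove (Put x a) = Suc (prod_encode (ecell x, a))"

lemma dcell_ecell[simp]: "dcell (ecell x) = x"
  by (simp add: dcell_def ecell_def map_idI)

lemma ecell_dcell[simp]: "ecell (dcell x) = x"
  by (simp add: dcell_def ecell_def map_idI)

lemma dcell_inj[simp]: "dcell x = dcell y \<longleftrightarrow> x = y"
  by (metis ecell_dcell)

lemma length_dcell[simp]: "length (dcell x) = lenc x"
  by (simp add: dcell_def lenc_def)

lemma dmove_emove[simp]: "dmove (emove m) = m"
  by (cases m) (auto simp: dmove_def pf_def ps_def)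

lemma emove_dmove[simp]: "emove (dmove m) = m"
  by (auto simp: dmove_def pf_def ps_def)

lemma dmove_inj[simp]: "dmove x = dmove y \<longleftrightarrow> x = y"
  by (metis emove_dmove)

lemma hdec_inj[simp]: "hdec x = hdec y \<longleftrightarrow> x = y"
proof
  assume "hdec x = hdec y"
  then have "map emove (hdec x) = map emove (hdec y)" by simp
  then have "list_decode x = list_decode y" by (simp add: hdec_def map_idI)
  then show "x = y" by (metis list_decode_inverse)
qed simp

lemma hdec_cons: "hdec (Suc (prod_encode (m, h))) = dmove m # hdec h"
  by (simp add: hdec_def)

lemma hdec_ehist[simp]: "hdec (list_encode (map emove hr)) = hr"
  by (simp add: hdec_def map_idI)

lemma hdec_Nil[simp]: "hdec x = [] \<longleftrightarrow> x = 0"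
  by (metis hdec_ehist hdec_inj list.simps(8) list_encode.simps(1))

lemma length_hdec[simp]: "length (hdec h) = lenc h"
  by (simp add: hdec_def lenc_def)

lemma nthc_eq: "j < lenc l \<Longrightarrow> nthc l j = list_decode l ! j"
  by (simp add: nthc_def lenc_def hdc_nth)

lemma nth_hdec: "i < lenc h \<Longrightarrow> hdec h ! i = dmove (nthc h i)"
  by (simp add: hdec_def nthc_eq) (simp add: lenc_def)

lemma nth_dcell: "t < lenc x \<Longrightarrow> dcell x ! t = int_decode (nthc x t)"
  by (simp add: dcell_def nthc_eq) (simp add: lenc_def)

section \<open>Config on reversed histories\<close>

definition legal :: "nat \<Rightarrow> nat \<Rightarrow> move \<Rightarrow> cell \<Rightarrow> bool" where
  "legal k d m y \<longleftrightarrow> (\<exists>a. m = Put y a \<and> a < k) \<and> length y = d"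

lemma cfg_rev_cons: "config_of k d (rev (m # hr)) y =
   (if config_of k d (rev hr) y = None \<and> legal k d m y then Some (case m of Put _ a \<Rightarrow> a | Pass \<Rightarrow> 0)
    else config_of k d (rev hr) y)"
  by (cases m) (auto simp: apply_move_def legal_def)

lemma cfg_rev_None: "config_of k d (rev hr) y = None \<longleftrightarrow> (\<forall>i<length hr. \<not> legal k d (hr ! i) y)"
proof (induction hr)
  case Nil then show ?case by simp
next
  case (Cons m hr)
  show ?case unfolding cfg_rev_cons using Cons by (auto simp: All_less_Suc2)
qed

lemma cfg_rev_Some: "config_of k d (rev hr) y = Some a \<longleftrightarrow>
   (\<exists>i<length hr. legal k d (hr ! i) y \<and> hr ! i = Put y a \<and> (\<forall>i2<length hr. i2 \<le> i \<or> \<not> legal k d (hr ! i2) y))"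
proof (induction hr)
  case Nil then show ?case by simp
next
  case (Cons m hr)
  let ?c = "config_of k d (rev hr) y"
  have "config_of k d (rev (m # hr)) y = Some a \<longleftrightarrow>
        (?c = None \<and> legal k d m y \<and> m = Put y a) \<or> ?c = Some a"
    unfolding cfg_rev_cons by (auto simp: legal_def)
  also have "\<dots> \<longleftrightarrow> (\<exists>i<length (m # hr). legal k d ((m # hr) ! i) y \<and> (m # hr) ! i = Put y a \<and>
       (\<forall>i2<length (m # hr). i2 \<le> i \<or> \<not> legal k d ((m # hr) ! i2) y))"
    unfolding Cons cfg_rev_None by (auto simp: Ex_less_Suc2 All_less_Suc2)
  finally show ?case .
qed

lemma isSumN_iff:
  assumes "lenc vc = d" "lenc jc = d"
  shows "isSumN d xc vc jc \<longleftrightarrow> dcell xc = vadd (dcell vc) (dcell jc)"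
proof -
  have lv: "length (vadd (dcell vc) (dcell jc)) = d" using assms by (simp add: vadd_def)
  have nv: "vadd (dcell vc) (dcell jc) ! t = dcell vc ! t + dcell jc ! t" if "t < d" for t
    using assms that by (simp add: vadd_def)
  have "dcell xc = vadd (dcell vc) (dcell jc) \<longleftrightarrow>
        lenc xc = d \<and> (\<forall>t<d. dcell xc ! t = dcell vc ! t + dcell jc ! t)"
    using lv nv by (auto simp: list_eq_iff_nth_eq)
  also have "\<dots> \<longleftrightarrow> isSumN d xc vc jc"
    unfolding isSumN_def using assms by (auto simp: nth_dcell int_decode_zpn)
  finally show ?thesis by simp
qed

lemma legalN_iff:
  assumes "lenc vc = d" "lenc jc = d"
  shows "legalN k d vc jc mc \<longleftrightarrow> legal k d (dmove mc) (vadd (dcell vc) (dcell jc))"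
proof -
  have lv: "length (vadd (dcell vc) (dcell jc)) = d" using assms by (simp add: vadd_def)
  show ?thesis unfolding legalN_def legal_def dmove_def
    using isSumN_iff[OF assms] lv by auto
qed

lemma cfgHasN_iff:
  assumes "lenc vc = d" "lenc jc = d"
  shows "cfgHasN k d hc vc jc col \<longleftrightarrow>
    config_of k d (rev (hdec hc)) (vadd (dcell vc) (dcell jc)) = Some col"
proof -
  let ?y = "vadd (dcell vc) (dcell jc)"
  have L: "legalN k d vc jc (nthc hc i) \<longleftrightarrow> legal k d (hdec hc ! i) ?y" if "i < lenc hc" for i
    using legalN_iff[OF assms] that by (simp add: nth_hdec)
  have C: "legal k d (hdec hc ! i) ?y \<Longrightarrow> (hdec hc ! i = Put ?y col \<longleftrightarrow> ps (nthc hc i - 1) = col)"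
    if "i < lenc hc" for i
    using that by (auto simp: nth_hdec legal_def dmove_def split: if_splits)
  show ?thesis unfolding cfg_rev_Some cfgHasN_def length_hdec
  proof (intro iffI; elim exE conjE)
    fix i assume i: "i < lenc hc" "legalN k d vc jc (nthc hc i)" "ps (nthc hc i - 1) = col"
      "\<forall>i2<lenc hc. i2 \<le> i \<or> \<not> legalN k d vc jc (nthc hc i2)"
    have l: "legal k d (hdec hc ! i) ?y" using L[OF i(1)] i(2) by simp
    have p: "hdec hc ! i = Put ?y col" using C[OF i(1) l] i(3) by simp
    have r: "\<forall>i2<lenc hc. i2 \<le> i \<or> \<not> legal k d (hdec hc ! i2) ?y" using L i(4) by simp
    show "\<exists>i<lenc hc. legal k d (hdec hc ! i) ?y \<and> hdec hc ! i = Put ?y col \<and>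
       (\<forall>i2<lenc hc. i2 \<le> i \<or> \<not> legal k d (hdec hc ! i2) ?y)"
      using i(1) l p r by blast
  next
    fix i assume i: "i < lenc hc" "legal k d (hdec hc ! i) ?y" "hdec hc ! i = Put ?y col"
      "\<forall>i2<lenc hc. i2 \<le> i \<or> \<not> legal k d (hdec hc ! i2) ?y"
    have l: "legalN k d vc jc (nthc hc i)" using L[OF i(1)] i(2) by simp
    have p: "ps (nthc hc i - 1) = col" using C[OF i(1) i(2)] i(3) by simp
    have r: "\<forall>i2<lenc hc. i2 \<le> i \<or> \<not> legalN k d vc jc (nthc hc i2)" using L i(4) by simp
    show "\<exists>idx<lenc hc. legalN k d vc jc (nthc hc idx) \<and> ps (nthc hc idx - 1) = col \<and>
       (\<forall>idx2<lenc hc. idx2 \<le> idx \<or> \<not> legalN k d vc jc (nthc hc idx2))"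
      using i(1) l p r by blast
  qed
qed

definition decF :: "nat \<Rightarrow> fpattern list" where
  "decF Fc = map (\<lambda>p. map decode_entry (list_decode p)) (list_decode Fc)"

lemma decode_entry_eq: "decode_entry e = (dcell (pf e), ps e)"
  by (simp add: decode_entry_def dcell_def pf_def ps_def split: prod.splits)

lemma decode_instance_eq: "decode_instance n = (pf n, decF (ps n))"
  by (simp add: decode_instance_def decF_def pf_def ps_def split: prod.splits)

lemma length_decF[simp]: "length (decF Fc) = lenc Fc"
  by (simp add: decF_def lenc_def)

lemma nth_decF: "qi < lenc Fc \<Longrightarrow> decF Fc ! qi = map decode_entry (list_decode (nthc Fc qi))"
  by (simp add: decF_def nthc_eq) (simp add: lenc_def)

lemma all_less_lenc: "(\<forall>i<lenc l. P (nthc l i)) \<longleftrightarrow> (\<forall>x\<in>set (list_decode l). P x)"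
proof -
  have "(\<forall>i<lenc l. P (nthc l i)) \<longleftrightarrow> (\<forall>i<length (list_decode l). P (list_decode l ! i))"
    unfolding lenc_def[symmetric] using nthc_eq by auto
  also have "\<dots> \<longleftrightarrow> (\<forall>x\<in>set (list_decode l). P x)" by (rule all_set_conv_all_nth[symmetric])
  finally show ?thesis .
qed

lemma ex_less_lenc: "(\<exists>i<lenc l. P (nthc l i)) \<longleftrightarrow> (\<exists>x\<in>set (list_decode l). P x)"
proof -
  have "(\<exists>i<lenc l. P (nthc l i)) \<longleftrightarrow> (\<exists>i<length (list_decode l). P (list_decode l ! i))"
    unfolding lenc_def[symmetric] using nthc_eq by auto
  also have "\<dots> \<longleftrightarrow> (\<exists>x\<in>set (list_decode l). P x)" by (metis in_set_conv_nth)
  finally show ?thesis .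
qed

lemma valid_q_iff:
  "(distinct (map fst (map decode_entry (list_decode p))) \<and>
    (\<forall>(x, a)\<in>set (map decode_entry (list_decode p)). length x = d \<and> a < k)) \<longleftrightarrow>
   ((\<forall>a<lenc p. \<forall>b<lenc p. a = b \<or> pf (nthc p a) \<noteq> pf (nthc p b)) \<and>
    (\<forall>a<lenc p. lenc (pf (nthc p a)) = d \<and> ps (nthc p a) < k))"
proof -
  have "distinct (map fst (map decode_entry (list_decode p))) \<longleftrightarrow>
        (\<forall>a<lenc p. \<forall>b<lenc p. a = b \<or> pf (nthc p a) \<noteq> pf (nthc p b))"
    by (auto simp: distinct_conv_nth decode_entry_eq lenc_def nthc_eq)
  moreover have "(\<forall>(x, a)\<in>set (map decode_entry (list_decode p)). length x = d \<and> a < k) \<longleftrightarrow>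
        (\<forall>a<lenc p. lenc (pf (nthc p a)) = d \<and> ps (nthc p a) < k)"
    unfolding all_less_lenc[where P="\<lambda>x. lenc (pf x) = d \<and> ps x < k"]
    by (auto simp: decode_entry_eq)
  ultimately show ?thesis by simp
qed

lemma validN_iff: "validN k d Fc \<longleftrightarrow> valid_instance k d (decF Fc)"
proof -
  have "validN k d Fc \<longleftrightarrow> (\<forall>p\<in>set (list_decode Fc).
     (\<forall>a<lenc p. \<forall>b<lenc p. a = b \<or> pf (nthc p a) \<noteq> pf (nthc p b)) \<and>
     (\<forall>a<lenc p. lenc (pf (nthc p a)) = d \<and> ps (nthc p a) < k))"
    unfolding validN_def by (rule all_less_lenc)
  also have "\<dots> \<longleftrightarrow> valid_instance k d (decF Fc)"
    unfolding valid_instance_def decF_def using valid_q_iff by auto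
  finally show ?thesis .
qed

lemma inLN_iff: "inLN Lc x \<longleftrightarrow> x \<in> pf ` set (list_decode Lc)"
  unfolding inLN_def ex_less_lenc[where P="\<lambda>e. pf e = x"] by auto

definition HS :: "nat \<Rightarrow> move list set" where "HS Lc = hdec ` pf ` set (list_decode Lc)"

lemma inLN_cons: "inLN Lc (Suc (prod_encode (mc, hc))) \<longleftrightarrow> dmove mc # hdec hc \<in> HS Lc"
proof -
  have "dmove mc # hdec hc = hdec (Suc (prod_encode (mc, hc)))" by (simp add: hdec_cons)
  then show ?thesis unfolding inLN_iff HS_def by (metis (no_types, lifting) hdec_inj image_iff)
qed

lemma inLN_0: "inLN Lc 0 \<longleftrightarrow> [] \<in> HS Lc"
proof -
  have "[] = hdec 0" by (simp add: hdec_def)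
  then show ?thesis unfolding inLN_iff HS_def by (metis (no_types, lifting) hdec_inj image_iff)
qed

definition Rs :: "nat \<Rightarrow> cell set" where "Rs Rc = dcell ` set (list_decode Rc)"

lemma dmove_0: "dmove 0 = Pass" by (simp add: dmove_def)
lemma dmove_put: "dmove (Suc (prod_encode (r, a))) = Put (dcell r) a" by (simp add: dmove_def pf_def ps_def)

lemma MR_Rs: "MR k (Rs Rc) = {Pass} \<union> {Put (dcell r) a | r a. r \<in> set (list_decode Rc) \<and> a < k}"
  by (auto simp: MR_def Rs_def)

lemma succAN_iff: "succAN k Rc Lc hc \<longleftrightarrow> (\<exists>m\<in>MR k (Rs Rc). m # hdec hc \<in> HS Lc)"
proof -
  have "succAN k Rc Lc hc \<longleftrightarrow> Pass # hdec hc \<in> HS Lc \<or>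
     (\<exists>r\<in>set (list_decode Rc). \<exists>a<k. Put (dcell r) a # hdec hc \<in> HS Lc)"
    unfolding succAN_def inLN_cons dmove_0 dmove_put
    using ex_less_lenc[where l=Rc and P="\<lambda>r. \<exists>a<k. Put (dcell r) a # hdec hc \<in> HS Lc"] by simp
  also have "\<dots> \<longleftrightarrow> (\<exists>m\<in>MR k (Rs Rc). m # hdec hc \<in> HS Lc)"
    unfolding MR_Rs by blast
  finally show ?thesis .
qed

lemma succBN_iff: "succBN k Rc Lc hc \<longleftrightarrow> (\<forall>m\<in>MR k (Rs Rc). m # hdec hc \<in> HS Lc)"
proof -
  have "succBN k Rc Lc hc \<longleftrightarrow> Pass # hdec hc \<in> HS Lc \<and>
     (\<forall>r\<in>set (list_decode Rc). \<forall>a<k. Put (dcell r) a # hdec hc \<in> HS Lc)"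
    unfolding succBN_def inLN_cons dmove_0 dmove_put
    using all_less_lenc[where l=Rc and P="\<lambda>r. \<forall>a<k. Put (dcell r) a # hdec hc \<in> HS Lc"] by simp
  also have "\<dots> \<longleftrightarrow> (\<forall>m\<in>MR k (Rs Rc). m # hdec hc \<in> HS Lc)"
    unfolding MR_Rs by blast
  finally show ?thesis .
qed

fun witOK :: "nat \<Rightarrow> nat \<Rightarrow> fpattern list \<Rightarrow> move list \<Rightarrow> (nat \<times> cell) option \<Rightarrow> bool" where
  "witOK k d F hr None = False"
| "witOK k d F hr (Some (qi, v)) = (qi < length F \<and> length v = d \<and>
     (\<forall>(j, a)\<in>set (F ! qi). config_of k d (rev hr) (vadd v j) = Some a))"

definition dw :: "nat \<Rightarrow> (nat \<times> cell) option" where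
  "dw wc = (if wc = 0 then None else Some (pf (wc - 1), dcell (ps (wc - 1))))"

fun ew :: "(nat \<times> cell) option \<Rightarrow> nat" where
  "ew None = 0" | "ew (Some (qi, v)) = Suc (prod_encode (qi, ecell v))"

lemma dw_ew[simp]: "dw (ew wo) = wo"
  by (cases wo) (auto simp: dw_def pf_def ps_def)

lemma WN_iff:
  assumes val: "valid_instance k d (decF Fc)"
  shows "WN k d Fc hc wc \<longleftrightarrow> witOK k d (decF Fc) (hdec hc) (dw wc)"
proof (cases "wc = 0")
  case True then show ?thesis by (simp add: WN_def dw_def)
next
  case False
  define qi where "qi = pf (wc - 1)"
  define vc where "vc = ps (wc - 1)"
  have dw: "dw wc = Some (qi, dcell vc)" using False by (simp add: dw_def qi_def vc_def)
  show ?thesis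
  proof (cases "qi < lenc Fc \<and> lenc vc = d")
    case False then show ?thesis unfolding WN_def dw qi_def[symmetric] vc_def[symmetric] by auto
  next
    case True
    define p where "p = nthc Fc qi"
    have Fq: "decF Fc ! qi = map decode_entry (list_decode p)" using True nth_decF p_def by simp
    have inF: "decF Fc ! qi \<in> set (decF Fc)" using True by simp
    have lj: "lenc (pf e) = d" if "e \<in> set (list_decode p)" for e
    proof -
      have "decode_entry e \<in> set (decF Fc ! qi)" using Fq that by simp
      then have "(dcell (pf e), ps e) \<in> set (decF Fc ! qi)" by (simp add: decode_entry_eq)
      then have "length (dcell (pf e)) = d" using val inF unfolding valid_instance_def by fastforce
      then show ?thesis by simp
    qed
    have "(\<forall>a<lenc p. cfgHasN k d hc vc (pf (nthc p a)) (ps (nthc p a))) \<longleftrightarrow>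
          (\<forall>e\<in>set (list_decode p). cfgHasN k d hc vc (pf e) (ps e))"
      by (rule all_less_lenc)
    also have "\<dots> \<longleftrightarrow> (\<forall>e\<in>set (list_decode p).
        config_of k d (rev (hdec hc)) (vadd (dcell vc) (dcell (pf e))) = Some (ps e))"
      using cfgHasN_iff[of vc d] True lj by auto
    also have "\<dots> \<longleftrightarrow> (\<forall>(j, a)\<in>set (decF Fc ! qi). config_of k d (rev (hdec hc)) (vadd (dcell vc) j) = Some a)"
      unfolding Fq by (auto simp: decode_entry_eq)
    finally show ?thesis unfolding WN_def dw qi_def[symmetric] vc_def[symmetric] p_def[symmetric]
      using True False by simp
  qed
qed

definition okD where
  "okD s k d F R HSet hr wo \<longleftrightarrow> witOK k d F hr wo \<or>
     (s (length hr) = PlA \<and> (\<exists>m\<in>MR k R. m # hr \<in> HSet)) \<or>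
     (s (length hr) = PlB \<and> (\<forall>m\<in>MR k R. m # hr \<in> HSet))"

abbreviation "wof s \<equiv> (\<lambda>i. if s i = PlA then 0 else (1::nat))"

lemma entryN_iff:
  assumes val: "valid_instance k d (decF Fc)"
  shows "entryN (wof s) k d Fc Rc Lc e \<longleftrightarrow> okD s k d (decF Fc) (Rs Rc) (HS Lc) (hdec (pf e)) (dw (ps e))"
proof -
  have "s (lenc (pf e)) = PlB \<longleftrightarrow> s (lenc (pf e)) \<noteq> PlA" by (cases "s (lenc (pf e))") auto
  then show ?thesis
    unfolding entryN_def okD_def WN_iff[OF val] succAN_iff succBN_iff length_hdec
    by auto
qed

lemma ChkN_iff: "ChkN (wof s) d c n \<longleftrightarrow> valid_instance (pf n) d (decF (ps n)) \<and> [] \<in> HS (ps c) \<and>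
  (\<forall>e\<in>set (list_decode (ps c)). okD s (pf n) d (decF (ps n)) (Rs (pf c)) (HS (ps c)) (hdec (pf e)) (dw (ps e)))"
proof -
  have "ChkN (wof s) d c n \<longleftrightarrow> valid_instance (pf n) d (decF (ps n)) \<and> [] \<in> HS (ps c) \<and>
     (\<forall>e\<in>set (list_decode (ps c)). entryN (wof s) (pf n) d (ps n) (pf c) (ps c) e)"
    unfolding ChkN_def validN_iff inLN_0 all_less_lenc[where P="entryN (wof s) (pf n) d (ps n) (pf c) (ps c)"] ..
  then show ?thesis using entryN_iff by auto
qed

lemma witOK_pat: assumes w: "witOK k d F hr wo" shows "pat d F (config_of k d (rev hr))"
proof (cases wo)
  case None then show ?thesis using w by simp
next
  case (Some p)
  obtain qi v where p: "p = (qi, v)" by fastforce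
  from w have qi: "qi < length F" and lv: "length v = d"
    and c: "\<forall>(j, a)\<in>set (F ! qi). config_of k d (rev hr) (vadd v j) = Some a"
    using Some p by auto
  have "\<forall>j\<in>dom (map_of (F ! qi)). config_of k d (rev hr) (vadd v j) = map_of (F ! qi) j"
  proof
    fix j assume "j \<in> dom (map_of (F ! qi))"
    then obtain a where a: "map_of (F ! qi) j = Some a" by blast
    then have "(j, a) \<in> set (F ! qi)" by (rule map_of_SomeD)
    then show "config_of k d (rev hr) (vadd v j) = map_of (F ! qi) j" using c a by auto
  qed
  then have "appears d (map_of (F ! qi)) (config_of k d (rev hr))"
    unfolding appears_def using lv by blast
  then show ?thesis unfolding pat_def using qi by force
qed

lemma pat_witOK:
  assumes val: "valid_instance k d F" and p: "pat d F (config_of k d h)"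
  shows "\<exists>qv. witOK k d F (rev h) (Some qv)"
proof -
  obtain q v where q: "q \<in> set F" and lv: "length v = d"
    and c: "\<forall>j\<in>dom (map_of q). config_of k d h (vadd v j) = map_of q j"
    using p unfolding pat_def appears_def by blast
  obtain qi where qi: "qi < length F" "F ! qi = q" using q by (meson in_set_conv_nth)
  have dq: "distinct (map fst q)" using val q unfolding valid_instance_def by blast
  have "\<forall>(j, a)\<in>set (F ! qi). config_of k d h (vadd v j) = Some a"
  proof (clarify)
    fix j a assume "(j, a) \<in> set (F ! qi)"
    then have m: "map_of q j = Some a" using qi dq by (simp add: map_of_is_SomeI)
    then have "j \<in> dom (map_of q)" by blast
    then show "config_of k d h (vadd v j) = Some a" using c m by simp
  qed
  then have "witOK k d F (rev h) (Some (qi, v))" using qi lv by simp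
  then show ?thesis by blast
qed

theorem nadg_iff: "n \<in> NADG s d \<longleftrightarrow> (\<exists>c. ChkN (wof s) d c n)"
proof -
  define k where "k = pf n"
  define F where "F = decF (ps n)"
  have mem: "n \<in> NADG s d \<longleftrightarrow> valid_instance k d F \<and> A_has_winning_strategy k d F s"
    by (simp add: NADG_def decode_instance_eq k_def F_def)
  show ?thesis
  proof
    assume "n \<in> NADG s d"
    then have val: "valid_instance k d F" and win: "A_has_winning_strategy k d F s" using mem by auto
    obtain R L where RL: "finite R" "finite L" "[] \<in> L" "ClosedG s k d F R L"
      using complG[OF win] by blast
    obtain Rl where Rl: "set Rl = R" using RL(1) finite_list by blast
    obtain Ll where Ll: "set Ll = L" using RL(2) finite_list by blast
    define wit where "wit = (\<lambda>h. if pat d F (config_of k d h)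
        then Some (SOME qv. witOK k d F (rev h) (Some qv)) else None)"
    have witp: "witOK k d F (rev h) (wit h)" if "pat d F (config_of k d h)" for h
    proof -
      have "\<exists>qv. witOK k d F (rev h) (Some qv)" using pat_witOK[OF val that] .
      then have "witOK k d F (rev h) (Some (SOME qv. witOK k d F (rev h) (Some qv)))" by (rule someI_ex)
      then show ?thesis using that unfolding wit_def by simp
    qed
    define eent where "eent = (\<lambda>h. prod_encode (list_encode (map emove (rev h)), ew (wit h)))"
    define c where "c = prod_encode (list_encode (map ecell Rl), list_encode (map eent Ll))"
    have pfc: "pf c = list_encode (map ecell Rl)" and psc: "ps c = list_encode (map eent Ll)"
      by (simp_all add: c_def pf_def ps_def)
    have Rs: "Rs (pf c) = R" unfolding Rs_def pfc using Rl by (simp add: image_image)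
    have hd_e: "hdec (pf (eent h)) = rev h" for h by (simp add: eent_def pf_def)
    have dw_e: "dw (ps (eent h)) = wit h" for h by (simp add: eent_def ps_def)
    have setL: "set (list_decode (ps c)) = eent ` L" unfolding psc using Ll by simp
    have HS: "HS (ps c) = rev ` L" unfolding HS_def setL by (simp add: image_image hd_e)
    have ok: "okD s k d F R (rev ` L) (rev h) (wit h)" if h: "h \<in> L" for h
    proof -
      have o: "okG s k d F R L h" using RL(4) h unfolding ClosedG_def by blast
      have cons: "m # rev h \<in> rev ` L" if "h @ [m] \<in> L" for m
        using that by (metis rev_eq_Cons_iff rev_rev_ident image_eqI)
      show ?thesis using o witp cons unfolding okG_def okD_def length_rev by blast
    qed
    have "ChkN (wof s) d c n"
      unfolding ChkN_iff k_def[symmetric] F_def[symmetric] Rs HS setL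
    proof (intro conjI)
      show "valid_instance k d F" by (rule val)
      show "[] \<in> rev ` L" using RL(3) by force
      show "\<forall>e\<in>eent ` L. okD s k d F R (rev ` L) (hdec (pf e)) (dw (ps e))"
        using ok by (simp add: hd_e dw_e)
    qed
    then show "\<exists>c. ChkN (wof s) d c n" by blast
  next
    assume "\<exists>c. ChkN (wof s) d c n"
    then obtain c where "ChkN (wof s) d c n" by blast
    then have val: "valid_instance k d F" and e: "[] \<in> HS (ps c)"
      and ok: "\<forall>e\<in>set (list_decode (ps c)). okD s k d F (Rs (pf c)) (HS (ps c)) (hdec (pf e)) (dw (ps e))"
      unfolding ChkN_iff k_def F_def by auto
    define L where "L = rev ` HS (ps c)"
    have fin: "finite L" unfolding L_def HS_def by simp
    have eL: "[] \<in> L" unfolding L_def using e by force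
    have "okG s k d F (Rs (pf c)) L h" if h: "h \<in> L" for h
    proof -
      obtain e where e: "e \<in> set (list_decode (ps c))" and he: "h = rev (hdec (pf e))"
        using h unfolding L_def HS_def by blast
      have o: "okD s k d F (Rs (pf c)) (HS (ps c)) (hdec (pf e)) (dw (ps e))" using ok e by blast
      have cons: "rev (hdec (pf e)) @ [m] \<in> L" if "m # hdec (pf e) \<in> HS (ps c)" for m
      proof -
        have "rev (m # hdec (pf e)) \<in> rev ` HS (ps c)" using that by (rule imageI)
        then show ?thesis unfolding L_def by simp
      qed
      show ?thesis using o witOK_pat cons unfolding okG_def okD_def he length_rev by blast
    qed
    then have "ClosedG s k d F (Rs (pf c)) L" unfolding ClosedG_def by blast
    then have "A_has_winning_strategy k d F s" using soundG fin eL by blast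
    then show "n \<in> NADG s d" using mem val by blast
  qed
qed

theorem corollary2:
  fixes s :: "nat \<Rightarrow> player" and d :: nat
  assumes "computable_word s"
  shows "rec_enum (NADG s d)"
  by (rule re_from_chk[OF assms]) (rule nadg_iff)

end
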